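(* Let $K\ge 1$, $n_1,\ldots,n_K$ be positive integers, $\Omega\subseteq\{1,\ldots,n_1\}\times\cdots\times\{1,\ldots,n_K\}$ an index set, $\mathcal{Y}_\Omega\in\mathbb{R}^{n_1\times\cdots\times n_K}$ a tensor supported on $\Omega$, $C>0$ and $\lambda_1,\ldots,\lambda_K>0$. Consider the nonnegative low-rank tensor completion problem $$\min_{\substack{\Theta_k\in\mathcal{P}^{n_k},\ \mathcal{W}^{(k)}\in\mathbb{R}^{n_1\times\cdots\times n_K}\\ k\in\{1,\ldots,K\}}}\ C\,\big\|\mathcal{W}_\Omega-\mathcal{Y}_\Omega\big\|^2+\sum_{k=1}^K\frac{1}{2\lambda_k}\big\langle \Theta_k^{\dagger}W^{(k)}_k,\,W^{(k)}_k\big\rangle\quad\text{subject to}\quad \mathcal{W}\ge 0,$$ where $\mathcal{W}=\sum_{k=1}^K\mathcal{W}^{(k)}$. An equivalent partial dual formulation of this problem is $$\min_{\substack{\Theta_k\in\mathcal{P}^{n_k}\\ k\in\{1,\ldots,K\}}}\ \max_{\substack{\mathcal{Z}\in\mathcal{C}\\ \mathcal{S}\in\mathbb{R}_+^{n_1\times\cdots\times n_K}}}\ \langle\mathcal{Z},\mathcal{Y}_\Omega\rangle-\frac{1}{4C}\|\mathcal{Z}\|^2-\sum_{k=1}^K\frac{\lambda_k}{2}\big\langle Z_k+S_k,\ \Theta_k(Z_k+S_k)\big\rangle,$$ where $\mathcal{C}=\{\mathcal{Z}\in\mathbb{R}^{n_1\times\cdots\times n_K}:\ \mathcal{Z}=\mathcal{Z}_\Omega\}$;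 here $\mathcal{Z}$ is the dual tensor variable corresponding to the primal problem and $\mathcal{S}$ is the dual tensor variable corresponding to the nonnegativity constraint $\mathcal{W}\ge 0$.
   Context: For a tensor $\mathcal{W}\in\mathbb{R}^{n_1\times\cdots\times n_K}$, $\mathcal{W}_\Omega$ denotes the tensor with $(\mathcal{W}_\Omega)_{i_1,\ldots,i_K}=\mathcal{W}_{i_1,\ldots,i_K}$ if $(i_1,\ldots,i_K)\in\Omega$ and $0$ otherwise. The inner product of two same-sized tensors (or matrices) is $\langle\mathcal{W},\mathcal{U}\rangle=\sum_{i_1,\ldots,i_K}\mathcal{W}_{i_1,\ldots,i_K}\mathcal{U}_{i_1,\ldots,i_K}$, and $\|\cdot\|$ is the induced (Frobenius) norm. $\mathcal{W}\ge 0$ means all entries are nonnegative, and $\mathbb{R}_+^{n_1\times\cdots\times n_K}$ is the set of entrywise nonnegative tensors. For a tensor $\mathcal{W}$, the mode-$k$ unfolding $W_k\in\mathbb{R}^{n_k\times n_1\cdots n_{k-1}n_{k+1}\cdots n_K}$ is the matrix whose columns are the mode-$k$ fibers $\mathcal{W}_{i_1,\ldots,i_{k-1},:,i_{k+1},\ldots,i_K}$; thus $W^{(k)}_k$, $Z_k$, $S_k$ are the mode-$k$ unfoldings of $\mathcal{W}^{(k)}$, $\mathcal{Z}$, $\mathcal{S}$ respectively. $\mathcal{P}^d=\{\Theta\in\mathbb{R}^{d\times d}:\ \Theta\succeq 0,\ \mathrm{tr}(\Theta)=1\}$, and $\Theta^\dagger$ denotes the Moore–Penrose pseudo-inverse of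 $\Theta$. *)

theory Defs
  imports Complex_Main "HOL-Library.Extended_Real"
begin

text \<open>Tensors of order K with sizes n 0, ..., n (K-1) (0-based indices) are functions on
  index tuples i :: nat \<Rightarrow> nat; only the values on the index set matter.\<close>

definition idx :: "nat \<Rightarrow> (nat \<Rightarrow> nat) \<Rightarrow> (nat \<Rightarrow> nat) set" where
  "idx K n = {i. (\<forall>k<K. i k < n k) \<and> (\<forall>k. K \<le> k \<longrightarrow> i k = 0)}"

definition restr :: "(nat \<Rightarrow> nat) set \<Rightarrow> ((nat \<Rightarrow> nat) \<Rightarrow> real) \<Rightarrow> (nat \<Rightarrow> nat) \<Rightarrow> real" where
  "restr \<Omega> W = (\<lambda>i. if i \<in> \<Omega> then W i else 0)"

definition tinner :: "nat \<Rightarrow> (nat \<Rightarrow> nat) \<Rightarrow> ((nat \<Rightarrow> nat) \<Rightarrow> real) \<Rightarrow> ((nat \<Rightarrow> nat) \<Rightarrow> real) \<Rightarrow> real" where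
  "tinner K n A B = (\<Sum>i\<in>idx K n. A i * B i)"

definition tnorm2 :: "nat \<Rightarrow> (nat \<Rightarrow> nat) \<Rightarrow> ((nat \<Rightarrow> nat) \<Rightarrow> real) \<Rightarrow> real" where
  "tnorm2 K n A = tinner K n A A"

definition matmul :: "nat \<Rightarrow> (nat \<Rightarrow> nat \<Rightarrow> real) \<Rightarrow> (nat \<Rightarrow> nat \<Rightarrow> real) \<Rightarrow> nat \<Rightarrow> nat \<Rightarrow> real" where
  "matmul d A B = (\<lambda>i j. \<Sum>l<d. A i l * B l j)"

definition is_pinv :: "nat \<Rightarrow> (nat \<Rightarrow> nat \<Rightarrow> real) \<Rightarrow> (nat \<Rightarrow> nat \<Rightarrow> real) \<Rightarrow> bool" where
  "is_pinv d A X \<longleftrightarrow>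
     (\<forall>i j. \<not> (i < d \<and> j < d) \<longrightarrow> X i j = 0) \<and>
     (\<forall>i<d. \<forall>j<d. matmul d (matmul d A X) A i j = A i j) \<and>
     (\<forall>i<d. \<forall>j<d. matmul d (matmul d X A) X i j = X i j) \<and>
     (\<forall>i<d. \<forall>j<d. matmul d A X i j = matmul d A X j i) \<and>
     (\<forall>i<d. \<forall>j<d. matmul d X A i j = matmul d X A j i)"

definition pinv :: "nat \<Rightarrow> (nat \<Rightarrow> nat \<Rightarrow> real) \<Rightarrow> nat \<Rightarrow> nat \<Rightarrow> real" where
  "pinv d A = (THE X. is_pinv d A X)"

definition qf :: "nat \<Rightarrow> (nat \<Rightarrow> nat \<Rightarrow> real) \<Rightarrow> (nat \<Rightarrow> real) \<Rightarrow> real" where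
  "qf d M x = (\<Sum>a<d. \<Sum>b<d. x a * M a b * x b)"

definition spectraplex :: "nat \<Rightarrow> (nat \<Rightarrow> nat \<Rightarrow> real) \<Rightarrow> bool" where
  "spectraplex d \<Theta> \<longleftrightarrow>
     (\<forall>i<d. \<forall>j<d. \<Theta> i j = \<Theta> j i) \<and> (\<forall>x. 0 \<le> qf d \<Theta> x) \<and> (\<Sum>i<d. \<Theta> i i) = 1"

definition in_range :: "nat \<Rightarrow> (nat \<Rightarrow> nat \<Rightarrow> real) \<Rightarrow> (nat \<Rightarrow> real) \<Rightarrow> bool" where
  "in_range d M f \<longleftrightarrow> (\<exists>x. \<forall>a<d. (\<Sum>b<d. M a b * x b) = f a)"

text \<open>Mode-k fibre through index tuple i; the columns of the mode-k unfolding are the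
  fibres through the tuples i with i k = 0.\<close>
definition fiber :: "nat \<Rightarrow> ((nat \<Rightarrow> nat) \<Rightarrow> real) \<Rightarrow> (nat \<Rightarrow> nat) \<Rightarrow> nat \<Rightarrow> real" where
  "fiber k W i = (\<lambda>a. W (i(k := a)))"

definition fibers :: "nat \<Rightarrow> (nat \<Rightarrow> nat) \<Rightarrow> nat \<Rightarrow> (nat \<Rightarrow> nat) set" where
  "fibers K n k = {i \<in> idx K n. i k = 0}"

text \<open>\<langle>M W_k, W_k\<rangle> for the mode-k unfolding W_k.\<close>
definition unfold_qf :: "nat \<Rightarrow> (nat \<Rightarrow> nat) \<Rightarrow> nat \<Rightarrow> (nat \<Rightarrow> nat \<Rightarrow> real) \<Rightarrow> ((nat \<Rightarrow> nat) \<Rightarrow> real) \<Rightarrow> real" where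
  "unfold_qf K n k M W = (\<Sum>i\<in>fibers K n k. qf (n k) M (fiber k W i))"

text \<open>\<langle>\<Theta>^\<dagger> W_k, W_k\<rangle> with the standard convention that it is +\<infinity> unless the
  column space of W_k lies in the range of \<Theta>.\<close>
definition pinv_term :: "nat \<Rightarrow> (nat \<Rightarrow> nat) \<Rightarrow> nat \<Rightarrow> (nat \<Rightarrow> nat \<Rightarrow> real) \<Rightarrow> ((nat \<Rightarrow> nat) \<Rightarrow> real) \<Rightarrow> ereal" where
  "pinv_term K n k \<Theta> W =
     (if (\<forall>i\<in>fibers K n k. in_range (n k) \<Theta> (fiber k W i))
      then ereal (unfold_qf K n k (pinv (n k) \<Theta>) W) else \<infinity>)"

definition primal_obj :: "nat \<Rightarrow> (nat \<Rightarrow> nat) \<Rightarrow> (nat \<Rightarrow> nat) set \<Rightarrow> ((nat \<Rightarrow> nat) \<Rightarrow> real) \<Rightarrow> real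
    \<Rightarrow> (nat \<Rightarrow> real) \<Rightarrow> (nat \<Rightarrow> nat \<Rightarrow> nat \<Rightarrow> real) \<Rightarrow> (nat \<Rightarrow> (nat \<Rightarrow> nat) \<Rightarrow> real) \<Rightarrow> ereal" where
  "primal_obj K n \<Omega> Y C lam \<Theta> Wf =
     (let W = (\<lambda>i. \<Sum>k<K. Wf k i) in
      ereal (C * tnorm2 K n (\<lambda>i. restr \<Omega> W i - restr \<Omega> Y i))
      + (\<Sum>k<K. ereal (1 / (2 * lam k)) * pinv_term K n k (\<Theta> k) (Wf k)))"

definition dual_obj :: "nat \<Rightarrow> (nat \<Rightarrow> nat) \<Rightarrow> (nat \<Rightarrow> nat) set \<Rightarrow> ((nat \<Rightarrow> nat) \<Rightarrow> real) \<Rightarrow> real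
    \<Rightarrow> (nat \<Rightarrow> real) \<Rightarrow> (nat \<Rightarrow> nat \<Rightarrow> nat \<Rightarrow> real) \<Rightarrow> ((nat \<Rightarrow> nat) \<Rightarrow> real) \<Rightarrow> ((nat \<Rightarrow> nat) \<Rightarrow> real) \<Rightarrow> real" where
  "dual_obj K n \<Omega> Y C lam \<Theta> Z S =
     tinner K n Z (restr \<Omega> Y) - 1 / (4 * C) * tnorm2 K n Z
     - (\<Sum>k<K. lam k / 2 * unfold_qf K n k (\<Theta> k) (\<lambda>i. Z i + S i))"

end

theory Submission
  imports Defs
begin

definition dotp :: "'i set \<Rightarrow> ('i \<Rightarrow> real) \<Rightarrow> ('i \<Rightarrow> real) \<Rightarrow> real" where
  "dotp I x y = (\<Sum>i\<in>I. x i * y i)"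

lemma dotp_lin_left: "dotp I (\<lambda>i. y i + s * z i) v = dotp I y v + s * dotp I z v"
  by (simp add: dotp_def sum.distrib sum_distrib_left algebra_simps)

lemma dotp_lin_right: "dotp I y (\<lambda>i. p * u i + q * v i) = p * dotp I y u + q * dotp I y v"
  by (simp add: dotp_def sum.distrib sum_distrib_left algebra_simps)

lemma farkas:
  assumes "finite I" "finite G"
    and "\<forall>y. (\<forall>g\<in>G. 0 \<le> dotp I y (a g)) \<longrightarrow> 0 \<le> dotp I y b"
  shows "\<exists>c. (\<forall>g\<in>G. 0 \<le> c g) \<and> (\<forall>i\<in>I. b i = (\<Sum>g\<in>G. c g * a g i))"
  using assms(2,3)
proof (induction G arbitrary: a b rule: finite_induct)
  case empty
  have "0 \<le> dotp I (\<lambda>i. - b i) b" using empty by simp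
  hence "(\<Sum>i\<in>I. b i * b i) \<le> 0" by (simp add: dotp_def sum_negf)
  moreover have "\<forall>i\<in>I. 0 \<le> b i * b i" by simp
  ultimately have "\<forall>i\<in>I. b i * b i = 0"
    using sum_nonneg_eq_0_iff[OF assms(1)] by (metis (no_types, lifting) antisym sum_nonneg)
  thus ?case by simp
next
  case (insert h G)
  show ?case
  proof (cases "\<forall>y. (\<forall>g\<in>G. 0 \<le> dotp I y (a g)) \<longrightarrow> 0 \<le> dotp I y b")
    case True
    from insert.IH[OF True] obtain c where c: "\<forall>g\<in>G. 0 \<le> c g" "\<forall>i\<in>I. b i = (\<Sum>g\<in>G. c g * a g i)" by blast
    have eq: "(\<Sum>g\<in>G. (c(h:=0)) g * a g i) = (\<Sum>g\<in>G. c g * a g i)" for i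
      using insert.hyps(2) by (intro sum.cong) auto
    show ?thesis
      by (rule exI[of _ "c(h:=0)"]) (use c insert.hyps eq in auto)
  next
    case False
    then obtain y0 where y0: "\<forall>g\<in>G. 0 \<le> dotp I y0 (a g)" "dotp I y0 b < 0" by force
    have "dotp I y0 (a h) < 0"
    proof (rule ccontr)
      assume "\<not> dotp I y0 (a h) < 0"
      hence "0 \<le> dotp I y0 b" using insert.prems y0(1) by auto
      thus False using y0(2) by simp
    qed
    define \<alpha> where "\<alpha> = - dotp I y0 (a h)"
    have \<alpha>: "\<alpha> > 0" using \<open>dotp I y0 (a h) < 0\<close> \<alpha>_def by simp
    define a' where "a' = (\<lambda>g i. dotp I y0 (a g) * a h i + \<alpha> * a g i)"
    define b' where "b' = (\<lambda>i. dotp I y0 b * a h i + \<alpha> * b i)"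
    have hyp: "\<forall>y. (\<forall>g\<in>G. 0 \<le> dotp I y (a' g)) \<longrightarrow> 0 \<le> dotp I y b'"
    proof (intro allI impI)
      fix y assume yh: "\<forall>g\<in>G. 0 \<le> dotp I y (a' g)"
      define s where "s = dotp I y (a h) / \<alpha>"
      define y'' where "y'' = (\<lambda>i. y i + s * y0 i)"
      have d: "dotp I y'' v = dotp I y v + s * dotp I y0 v" for v
        unfolding y''_def by (rule dotp_lin_left)
      have "dotp I y'' (a h) = 0" using \<alpha> unfolding d s_def \<alpha>_def by (simp add: field_simps)
      moreover have "0 \<le> dotp I y'' (a g)" if g: "g \<in> G" for g
      proof -
        have "dotp I y (a' g) = dotp I y0 (a g) * dotp I y (a h) + \<alpha> * dotp I y (a g)"
          unfolding a'_def by (rule dotp_lin_right)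
        also have "\<dots> = \<alpha> * dotp I y'' (a g)" using \<alpha> unfolding d s_def by (simp add: field_simps)
        finally show ?thesis using yh g \<alpha> by (metis zero_le_mult_iff not_less)
      qed
      ultimately have "0 \<le> dotp I y'' b" using insert.prems by auto
      moreover have "dotp I y b' = \<alpha> * dotp I y'' b"
      proof -
        have "dotp I y b' = dotp I y0 b * dotp I y (a h) + \<alpha> * dotp I y b"
          unfolding b'_def by (rule dotp_lin_right)
        also have "\<dots> = \<alpha> * dotp I y'' b" using \<alpha> unfolding d s_def by (simp add: field_simps)
        finally show ?thesis .
      qed
      ultimately show "0 \<le> dotp I y b'" using \<alpha> by simp
    qed
    from insert.IH[OF hyp] obtain c where c: "\<forall>g\<in>G. 0 \<le> c g"
      "\<forall>i\<in>I. b' i = (\<Sum>g\<in>G. c g * a' g i)" by blast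
    define ch where "ch = ((\<Sum>g\<in>G. c g * dotp I y0 (a g)) - dotp I y0 b) / \<alpha>"
    have "0 \<le> (\<Sum>g\<in>G. c g * dotp I y0 (a g))" using y0 c(1) by (auto intro!: sum_nonneg)
    hence ch: "0 \<le> ch" unfolding ch_def using \<alpha> y0
      by (intro divide_nonneg_pos) auto
    have "b i = ch * a h i + (\<Sum>g\<in>G. c g * a g i)" if i: "i \<in> I" for i
    proof -
      have "b' i = (\<Sum>g\<in>G. c g * a' g i)" using c(2) i by auto
      also have "\<dots> = a h i * (\<Sum>g\<in>G. c g * dotp I y0 (a g)) + \<alpha> * (\<Sum>g\<in>G. c g * a g i)"
        unfolding a'_def by (simp add: algebra_simps sum.distrib sum_distrib_left)
      finally have "dotp I y0 b * a h i + \<alpha> * b i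
          = a h i * (\<Sum>g\<in>G. c g * dotp I y0 (a g)) + \<alpha> * (\<Sum>g\<in>G. c g * a g i)"
        unfolding b'_def .
      thus ?thesis using \<alpha> unfolding ch_def by (simp add: field_simps)
    qed
    moreover have "(\<Sum>g\<in>G. (c(h:=ch)) g * a g i) = (\<Sum>g\<in>G. c g * a g i)" for i
      using insert.hyps(2) by (intro sum.cong) auto
    ultimately show ?thesis using c(1) ch insert.hyps
      by (intro exI[of _ "c(h:=ch)"]) auto
  qed
qed

lemma solvable:
  fixes A :: "nat \<Rightarrow> nat \<Rightarrow> real" and b :: "nat \<Rightarrow> real"
  assumes H: "\<And>y. (\<forall>l<d. (\<Sum>a<d. y a * A a l) = 0) \<Longrightarrow> (\<Sum>a<d. y a * b a) = 0"
  shows "\<exists>x. \<forall>a<d. (\<Sum>l<d. A a l * x l) = b a"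
proof -
  define gen where "gen = (\<lambda>(l::nat, s::bool) a. if s then A a l else - A a l)"
  have "\<forall>y. (\<forall>g\<in>{..<d} \<times> UNIV. 0 \<le> dotp {..<d} y (gen g)) \<longrightarrow> 0 \<le> dotp {..<d} y b"
  proof (intro allI impI)
    fix y assume h: "\<forall>g\<in>{..<d} \<times> UNIV. 0 \<le> dotp {..<d} y (gen g)"
    have hl: "\<forall>l<d. (\<Sum>a<d. y a * A a l) = 0"
    proof (intro allI impI)
      fix l :: nat assume l: "l < d"
      have "0 \<le> dotp {..<d} y (gen (l, True))" "0 \<le> dotp {..<d} y (gen (l, False))"
        using h l by auto
      thus "(\<Sum>a<d. y a * A a l) = 0" by (simp add: gen_def dotp_def sum_negf)
    qed
    have "(\<Sum>a<d. y a * b a) = 0" by (rule H[OF hl])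
    thus "0 \<le> dotp {..<d} y b" by (simp add: dotp_def)
  qed
  moreover have fin: "finite ({..<d} \<times> (UNIV::bool set))" by simp
  ultimately obtain c where c:
    "\<forall>i\<in>{..<d}. b i = (\<Sum>g\<in>{..<d} \<times> UNIV. c g * gen g i)"
    using farkas[of "{..<d}" "{..<d} \<times> (UNIV::bool set)" gen b] by blast
  have "(\<Sum>l<d. A a l * (c (l, True) - c (l, False))) = b a" if "a < d" for a
  proof -
    have "b a = (\<Sum>g\<in>{..<d} \<times> UNIV. c g * gen g a)" using c that by simp
    also have "\<dots> = (\<Sum>l<d. \<Sum>s\<in>UNIV. c (l, s) * gen (l, s) a)"
      by (simp add: sum.cartesian_product)
    also have "\<dots> = (\<Sum>l<d. A a l * (c (l, True) - c (l, False)))"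
      by (intro sum.cong) (auto simp: UNIV_bool gen_def algebra_simps)
    finally show ?thesis by (rule sym)
  qed
  thus ?thesis by (intro exI[of _ "\<lambda>l. c (l, True) - c (l, False)"] allI impI) simp
qed

definition mtr :: "(nat \<Rightarrow> nat \<Rightarrow> real) \<Rightarrow> nat \<Rightarrow> nat \<Rightarrow> real" where
  "mtr A = (\<lambda>i j. A j i)"
definition mcut :: "nat \<Rightarrow> (nat \<Rightarrow> nat \<Rightarrow> real) \<Rightarrow> nat \<Rightarrow> nat \<Rightarrow> real" where
  "mcut d A = (\<lambda>i j. if i < d \<and> j < d then A i j else 0)"

lemma matmul_assoc: "matmul d (matmul d A B) C = matmul d A (matmul d B C)"
proof (intro ext)
  fix i j
  have "matmul d (matmul d A B) C i j = (\<Sum>l<d. \<Sum>m<d. A i m * B m l * C l j)"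
    by (simp add: matmul_def sum_distrib_right)
  also have "\<dots> = (\<Sum>m<d. \<Sum>l<d. A i m * B m l * C l j)" by (rule sum.swap)
  also have "\<dots> = matmul d A (matmul d B C) i j"
    by (simp add: matmul_def sum_distrib_left mult.assoc)
  finally show "matmul d (matmul d A B) C i j = matmul d A (matmul d B C) i j" .
qed

lemma mtr_matmul: "mtr (matmul d A B) = matmul d (mtr B) (mtr A)"
  by (auto simp: mtr_def matmul_def mult.commute)

lemma mtr_mtr[simp]: "mtr (mtr A) = A" by (simp add: mtr_def)

definition cutp :: "nat \<Rightarrow> (nat \<Rightarrow> nat \<Rightarrow> real) \<Rightarrow> bool" where
  "cutp d A \<longleftrightarrow> (\<forall>i j. \<not> (i < d \<and> j < d) \<longrightarrow> A i j = 0)"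

lemma cutp_mcut: "cutp d (mcut d A)" by (simp add: cutp_def mcut_def)

lemma cutp_matmul: "cutp d A \<Longrightarrow> cutp d B \<Longrightarrow> cutp d (matmul d A B)"
  by (auto simp: cutp_def matmul_def)


lemma cut_eqI: "cutp d P \<Longrightarrow> cutp d Q \<Longrightarrow> (\<And>i j. i < d \<Longrightarrow> j < d \<Longrightarrow> P i j = Q i j) \<Longrightarrow> P = Q"
  unfolding cutp_def by (intro ext) (metis)

lemma mcut_in: "i < d \<Longrightarrow> j < d \<Longrightarrow> mcut d T i j = T i j" by (simp add: mcut_def)

lemma mm_cut_left: "i < d \<Longrightarrow> matmul d (mcut d T) X i l = matmul d T X i l"
  by (auto simp: matmul_def mcut_def intro!: sum.cong)
lemma mm_cut_right: "j < d \<Longrightarrow> matmul d X (mcut d T) l j = matmul d X T l j"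
  by (auto simp: matmul_def mcut_def intro!: sum.cong)
lemma mm_cut_1: "i < d \<Longrightarrow> j < d \<Longrightarrow>
   matmul d (matmul d (mcut d T) X) (mcut d T) i j = matmul d (matmul d T X) T i j"
  by (auto simp: matmul_def mcut_def intro!: sum.cong)
lemma mm_cut_2: "matmul d (matmul d X (mcut d T)) X i j = matmul d (matmul d X T) X i j"
  unfolding matmul_def by (intro sum.cong refl) (simp add: mcut_def)

lemma cutp_mtr: "cutp d P \<Longrightarrow> cutp d (mtr P)"
  by (auto simp: cutp_def mtr_def)

lemma pinv_full:
  assumes "is_pinv d T X"
  shows "cutp d X" "matmul d (matmul d (mcut d T) X) (mcut d T) = mcut d T"
    "matmul d (matmul d X (mcut d T)) X = X"
    "mtr (matmul d (mcut d T) X) = matmul d (mcut d T) X"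
    "mtr (matmul d X (mcut d T)) = matmul d X (mcut d T)"
proof -
  show cX: "cutp d X" using assms by (simp add: is_pinv_def cutp_def)
  have c1: "cutp d (matmul d (mcut d T) X)" "cutp d (matmul d X (mcut d T))"
    by (intro cutp_matmul cutp_mcut cX)+
  have c2: "cutp d (matmul d (matmul d (mcut d T) X) (mcut d T))"
    "cutp d (matmul d (matmul d X (mcut d T)) X)"
    by (intro cutp_matmul cutp_mcut cX)+
  show "matmul d (matmul d (mcut d T) X) (mcut d T) = mcut d T"
    by (rule cut_eqI[OF c2(1) cutp_mcut]) (use assms in \<open>auto simp: mm_cut_1 is_pinv_def mcut_in\<close>)
  show "matmul d (matmul d X (mcut d T)) X = X"
    by (rule cut_eqI[OF c2(2) cX]) (use assms in \<open>auto simp: mm_cut_2 is_pinv_def\<close>)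
  show "mtr (matmul d (mcut d T) X) = matmul d (mcut d T) X"
    by (rule cut_eqI[OF cutp_mtr[OF c1(1)] c1(1)]) (use assms in \<open>auto simp: mtr_def mm_cut_left is_pinv_def\<close>)
  show "mtr (matmul d X (mcut d T)) = matmul d X (mcut d T)"
    by (rule cut_eqI[OF cutp_mtr[OF c1(2)] c1(2)]) (use assms in \<open>auto simp: mtr_def mm_cut_right is_pinv_def\<close>)
qed

lemma pinv_fromfull:
  assumes "cutp d X" "matmul d (matmul d (mcut d T) X) (mcut d T) = mcut d T"
    "matmul d (matmul d X (mcut d T)) X = X"
    "mtr (matmul d (mcut d T) X) = matmul d (mcut d T) X"
    "mtr (matmul d X (mcut d T)) = matmul d X (mcut d T)"
  shows "is_pinv d T X"
  unfolding is_pinv_def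
proof (intro conjI allI impI)
  show "X i j = 0" if "\<not> (i < d \<and> j < d)" for i j using assms(1) that by (simp add: cutp_def)
  fix i j assume ij: "i < d" "j < d"
  show "matmul d (matmul d T X) T i j = T i j"
    using ij mm_cut_1[of i d j T X] fun_cong[OF fun_cong[OF assms(2)], of i j] by (simp add: mcut_def)
  show "matmul d (matmul d X T) X i j = X i j"
    using mm_cut_2[of d X T i j] fun_cong[OF fun_cong[OF assms(3)], of i j] by simp
  show "matmul d T X i j = matmul d T X j i"
    using ij mm_cut_left[of i d T X j] mm_cut_left[of j d T X i] fun_cong[OF fun_cong[OF assms(4)], of j i]
    by (simp add: mtr_def)
  show "matmul d X T i j = matmul d X T j i"
    using ij mm_cut_right[of j d X T i] mm_cut_right[of i d X T j] fun_cong[OF fun_cong[OF assms(5)], of j i]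
    by (simp add: mtr_def)
qed

abbreviation (input) "mm \<equiv> matmul"

lemma pinv_unique_full:
  assumes A: "mtr A = A"
    and X1: "matmul d (matmul d A X) A = A" and X2: "matmul d (matmul d X A) X = X"
    and X3: "mtr (matmul d A X) = matmul d A X" and X4: "mtr (matmul d X A) = matmul d X A"
    and Y1: "matmul d (matmul d A Y) A = A" and Y2: "matmul d (matmul d Y A) Y = Y"
    and Y3: "mtr (matmul d A Y) = matmul d A Y" and Y4: "mtr (matmul d Y A) = matmul d Y A"
  shows "X = Y"
proof -
  have AX: "matmul d A X = matmul d A Y"
  proof -
    have "matmul d A X = matmul d (matmul d (matmul d A Y) A) X" using Y1 by simp
    also have "\<dots> = matmul d (matmul d A Y) (matmul d A X)" by (simp add: matmul_assoc)
    also have "\<dots> = matmul d (mtr (matmul d A Y)) (mtr (matmul d A X))" using X3 Y3 by simp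
    also have "\<dots> = mtr (matmul d (matmul d A X) (matmul d A Y))" by (simp add: mtr_matmul)
    also have "matmul d (matmul d A X) (matmul d A Y) = matmul d A Y"
      using X1 by (metis matmul_assoc)
    finally show ?thesis using Y3 by simp
  qed
  have XA: "matmul d X A = matmul d Y A"
  proof -
    have "matmul d X A = matmul d X (matmul d (matmul d A Y) A)" using Y1 by simp
    also have "\<dots> = matmul d (matmul d X A) (matmul d Y A)" by (simp add: matmul_assoc)
    also have "\<dots> = matmul d (mtr (matmul d X A)) (mtr (matmul d Y A))" using X4 Y4 by simp
    also have "\<dots> = mtr (matmul d (matmul d Y A) (matmul d X A))" by (simp add: mtr_matmul)
    also have "matmul d (matmul d Y A) (matmul d X A) = matmul d Y A"
      using X1 by (metis matmul_assoc)
    finally show ?thesis using Y4 by simp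
  qed
  have "X = matmul d (matmul d X A) X" using X2 by simp
  also have "\<dots> = matmul d (matmul d Y A) X" using XA by simp
  also have "\<dots> = matmul d Y (matmul d A X)" by (simp add: matmul_assoc)
  also have "\<dots> = matmul d Y (matmul d A Y)" using AX by simp
  also have "\<dots> = Y" using Y2 by (simp add: matmul_assoc)
  finally show ?thesis .
qed

lemma sq_solvable:
  fixes A :: "nat \<Rightarrow> nat \<Rightarrow> real"
  assumes sym: "mtr A = A" and b: "b < d"
  shows "\<exists>x. \<forall>a<d. (\<Sum>l<d. matmul d A A a l * x l) = A a b"
proof (rule solvable)
  fix y assume h: "\<forall>l<d. (\<Sum>a<d. y a * matmul d A A a l) = 0"
  have S: "A i j = A j i" for i j using fun_cong[OF fun_cong[OF sym], of i j] by (simp add: mtr_def)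
  define z where "z = (\<lambda>m. \<Sum>a<d. y a * A a m)"
  have hz: "(\<Sum>m<d. z m * A m l) = 0" if "l < d" for l
  proof -
    have "(\<Sum>m<d. z m * A m l) = (\<Sum>m<d. \<Sum>a<d. y a * A a m * A m l)"
      by (simp add: z_def sum_distrib_right)
    also have "\<dots> = (\<Sum>a<d. \<Sum>m<d. y a * A a m * A m l)" by (rule sum.swap)
    also have "\<dots> = (\<Sum>a<d. y a * matmul d A A a l)"
      by (simp add: matmul_def sum_distrib_left mult.assoc)
    finally show ?thesis using h that by simp
  qed
  have "(\<Sum>m<d. z m * z m) = (\<Sum>m<d. \<Sum>l<d. z m * A m l * y l)"
    by (simp add: z_def sum_distrib_left S mult.assoc mult.commute)
  also have "\<dots> = (\<Sum>l<d. (\<Sum>m<d. z m * A m l) * y l)"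
    by (subst sum.swap) (simp add: sum_distrib_right)
  also have "\<dots> = 0" using hz by simp
  finally have "(\<Sum>m<d. z m * z m) = 0" .
  hence "\<forall>m\<in>{..<d}. z m * z m = 0"
    by (subst sum_nonneg_eq_0_iff[symmetric]) auto
  thus "(\<Sum>a<d. y a * A a b) = 0" using b by (simp add: z_def)
qed

definition pinv_G :: "nat \<Rightarrow> (nat \<Rightarrow> nat \<Rightarrow> real) \<Rightarrow> nat \<Rightarrow> nat \<Rightarrow> real" where
  "pinv_G d A = (\<lambda>l b. if l < d \<and> b < d then
      (SOME x. \<forall>a<d. (\<Sum>l<d. matmul d A A a l * x l) = A a b) l else 0)"

definition pinv_X :: "nat \<Rightarrow> (nat \<Rightarrow> nat \<Rightarrow> real) \<Rightarrow> nat \<Rightarrow> nat \<Rightarrow> real" where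
  "pinv_X d T = (let A = mcut d T; G = pinv_G d A in matmul d (mtr G) (matmul d A G))"

lemma pinv_G_eq:
  assumes sym: "mtr A = A" and cA: "cutp d A"
  shows "matmul d (matmul d A A) (pinv_G d A) = A" "cutp d (pinv_G d A)"
proof -
  show cG: "cutp d (pinv_G d A)" by (simp add: cutp_def pinv_G_def)
  show "matmul d (matmul d A A) (pinv_G d A) = A"
  proof (rule cut_eqI[OF cutp_matmul[OF cutp_matmul[OF cA cA] cG] cA])
    fix i j assume ij: "i < d" "j < d"
    have "\<forall>a<d. (\<Sum>l<d. matmul d A A a l * (SOME x. \<forall>a<d. (\<Sum>l<d. matmul d A A a l * x l) = A a j) l) = A a j"
      by (rule someI_ex[OF sq_solvable[OF sym ij(2)]])
    thus "matmul d (matmul d A A) (pinv_G d A) i j = A i j"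
      using ij by (simp add: matmul_def[of d "matmul d A A"] pinv_G_def)
  qed
qed

lemma pinv_X_props:
  assumes sym: "\<forall>i<d. \<forall>j<d. T i j = T j i"
  defines "A \<equiv> mcut d T" and "X \<equiv> pinv_X d T"
  shows "cutp d X" "matmul d (matmul d A X) A = A" "matmul d (matmul d X A) X = X"
    "mtr (matmul d A X) = matmul d A X" "mtr (matmul d X A) = matmul d X A" "mtr X = X"
proof -
  have sA: "mtr A = A" unfolding A_def mtr_def mcut_def using sym by (auto intro!: ext)
  have cA: "cutp d A" unfolding A_def by (rule cutp_mcut)
  define G where "G = pinv_G d A"
  have E0: "matmul d (matmul d A A) G = A" and cG: "cutp d G"
    using pinv_G_eq[OF sA cA] by (simp_all add: G_def)
  have X: "X = matmul d (mtr G) (matmul d A G)"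
    by (simp add: X_def pinv_X_def A_def G_def Let_def)
  define P where "P = matmul d A G"
  have E1: "matmul d (mtr G) (matmul d A A) = A"
    using arg_cong[OF E0, of mtr] by (simp add: mtr_matmul sA)
  have E2: "matmul d (mtr G) A = P"
  proof -
    have "matmul d (mtr G) A = matmul d (mtr G) (matmul d (matmul d A A) G)" using E0 by simp
    also have "\<dots> = matmul d (matmul d (mtr G) (matmul d A A)) G" by (simp add: matmul_assoc)
    finally show ?thesis using E1 P_def by simp
  qed
  have E3: "mtr P = P" using E2 by (simp add: P_def mtr_matmul sA)
  have E4: "matmul d A P = A" using E0 by (simp add: P_def matmul_assoc)
  have E5: "matmul d P A = A"
  proof -
    have "matmul d P A = matmul d (mtr P) (mtr A)" using E3 sA by simp
    also have "\<dots> = mtr (matmul d A P)" by (simp add: mtr_matmul)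
    finally show ?thesis using E4 sA by simp
  qed
  have E6: "X = matmul d P G" using X E2 by (simp add: P_def matmul_assoc[symmetric])
  have AX: "matmul d A X = P" using E6 E4 by (simp add: matmul_assoc[symmetric] P_def)
  have XA: "matmul d X A = P" using X E5 E2 by (simp add: P_def[symmetric] matmul_assoc)
  have PP: "matmul d P P = P" using E5 by (simp add: P_def matmul_assoc[symmetric])
  show "cutp d X" unfolding X by (intro cutp_matmul cutp_mtr cG cA)
  show "matmul d (matmul d A X) A = A" using AX E5 by simp
  show "matmul d (matmul d X A) X = X" using XA E6 PP by (simp add: matmul_assoc[symmetric])
  show "mtr (matmul d A X) = matmul d A X" using AX E3 by simp
  show "mtr (matmul d X A) = matmul d X A" using XA E3 by simp
  have "mtr X = matmul d (mtr P) (mtr (mtr G))" unfolding X P_def[symmetric] by (rule mtr_matmul)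
  thus "mtr X = X" using E3 E6 by simp
qed

lemma pinv_eq:
  assumes sym: "\<forall>i<d. \<forall>j<d. T i j = T j i"
  shows "pinv d T = pinv_X d T" "is_pinv d T (pinv d T)"
proof -
  have sA: "mtr (mcut d T) = mcut d T" unfolding mtr_def mcut_def using sym by (auto intro!: ext)
  note P = pinv_X_props[OF sym]
  have ip: "is_pinv d T (pinv_X d T)" by (rule pinv_fromfull) (use P in auto)
  show "pinv d T = pinv_X d T" unfolding pinv_def
  proof (rule the_equality[of "is_pinv d T", OF ip])
    fix Y assume "is_pinv d T Y"
    note Q = pinv_full[OF this]
    show "Y = pinv_X d T" by (rule pinv_unique_full[OF sA Q(2-5) P(2-5)])
  qed
  thus "is_pinv d T (pinv d T)" using ip by simp
qed

lemma finite_idx: "finite (idx K n)"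
proof -
  have "idx K n \<subseteq> {f. \<forall>x. (x \<in> {..<K} \<longrightarrow> f x \<in> {..<(\<Sum>k<K. n k)}) \<and> (x \<notin> {..<K} \<longrightarrow> f x = 0)}"
  proof (intro subsetI CollectI allI conjI impI)
    fix f x assume f: "f \<in> idx K n" and x: "x \<in> {..<K}"
    have "f x < n x" using f x by (auto simp: idx_def)
    also have "n x \<le> (\<Sum>k<K. n k)" using x by (intro member_le_sum) auto
    finally show "f x \<in> {..<(\<Sum>k<K. n k)}" by simp
  next
    fix f x assume "f \<in> idx K n" "x \<notin> {..<K}" thus "f x = 0" by (auto simp: idx_def)
  qed
  thus ?thesis by (rule finite_subset) (intro finite_set_of_finite_funs; simp)
qed

lemma finite_fibers: "finite (fibers K n k)"
  using finite_idx by (simp add: fibers_def)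

lemma upd_idx: "j \<in> idx K n \<Longrightarrow> k < K \<Longrightarrow> a < n k \<Longrightarrow> j(k := a) \<in> idx K n"
  by (auto simp: idx_def)

lemma sum_idx_fibers:
  assumes k: "k < K"
  shows "(\<Sum>i\<in>idx K n. f i) = (\<Sum>j\<in>fibers K n k. \<Sum>a<n k. f (j(k := a)))"
proof -
  have bij: "bij_betw (\<lambda>(j, a). j(k := a)) (fibers K n k \<times> {..<n k}) (idx K n)"
    unfolding bij_betw_def
  proof
    show "inj_on (\<lambda>(j, a). j(k := a)) (fibers K n k \<times> {..<n k})"
    proof (rule inj_onI, clarify)
      fix j a j' a' assume j: "j \<in> fibers K n k" and j': "j' \<in> fibers K n k"
        and e: "j(k := a) = j'(k := a')"
      have "a = a'" using fun_cong[OF e, of k] by simp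
      moreover have "j = j'"
      proof
        fix m show "j m = j' m"
          using fun_cong[OF e, of m] j j' by (cases "m = k") (auto simp: fibers_def)
      qed
      ultimately show "j = j' \<and> a = a'" by simp
    qed
    show "(\<lambda>(j, a). j(k := a)) ` (fibers K n k \<times> {..<n k}) = idx K n"
    proof (rule set_eqI, rule iffI)
      fix x assume "x \<in> (\<lambda>(j, a). j(k := a)) ` (fibers K n k \<times> {..<n k})"
      thus "x \<in> idx K n" using k upd_idx by (auto simp: fibers_def)
    next
      fix i assume i: "i \<in> idx K n"
      hence "i k < n k" using k by (auto simp: idx_def)
      hence "i(k := 0) \<in> fibers K n k" using i k by (auto simp: fibers_def intro!: upd_idx)
      moreover have "i = (i(k := 0))(k := i k)" by simp
      ultimately show "i \<in> (\<lambda>(j, a). j(k := a)) ` (fibers K n k \<times> {..<n k})"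
        using \<open>i k < n k\<close> by (auto intro!: image_eqI[of _ _ "(i(k := 0), i k)"])
    qed
  qed
  have "(\<Sum>i\<in>idx K n. f i) = (\<Sum>p\<in>fibers K n k \<times> {..<n k}. f ((\<lambda>(j, a). j(k := a)) p))"
    by (rule sum.reindex_bij_betw[OF bij, symmetric])
  also have "\<dots> = (\<Sum>j\<in>fibers K n k. \<Sum>a<n k. f (j(k := a)))"
    by (simp add: sum.cartesian_product split_def)
  finally show ?thesis .
qed

definition Tm :: "(nat \<Rightarrow> nat) \<Rightarrow> nat \<Rightarrow> (nat \<Rightarrow> nat \<Rightarrow> real) \<Rightarrow> ((nat \<Rightarrow> nat) \<Rightarrow> real) \<Rightarrow> (nat \<Rightarrow> nat) \<Rightarrow> real" where
  "Tm n k M V = (\<lambda>i. \<Sum>b<n k. M (i k) b * V (i(k := b)))"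

lemma tinner_Tm_fib:
  assumes "k < K"
  shows "tinner K n U (Tm n k M V) =
    (\<Sum>j\<in>fibers K n k. \<Sum>a<n k. \<Sum>b<n k. U (j(k := a)) * M a b * V (j(k := b)))"
  unfolding tinner_def sum_idx_fibers[OF assms]
  by (simp add: Tm_def sum_distrib_left mult.assoc)

lemma unfold_qf_eq:
  assumes "k < K"
  shows "unfold_qf K n k M W = tinner K n W (Tm n k M W)"
  unfolding tinner_Tm_fib[OF assms] unfold_qf_def qf_def fiber_def by simp

lemma tinner_Tm_sym:
  assumes "k < K" and sym: "\<forall>a<n k. \<forall>b<n k. M a b = M b a"
  shows "tinner K n U (Tm n k M V) = tinner K n V (Tm n k M U)"
  unfolding tinner_Tm_fib[OF assms(1)]
proof (rule sum.cong[OF refl])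
  fix j
  have "(\<Sum>a<n k. \<Sum>b<n k. U (j(k := a)) * M a b * V (j(k := b)))
      = (\<Sum>b<n k. \<Sum>a<n k. U (j(k := a)) * M a b * V (j(k := b)))" by (rule sum.swap)
  also have "\<dots> = (\<Sum>b<n k. \<Sum>a<n k. V (j(k := b)) * M b a * U (j(k := a)))"
    using sym by (intro sum.cong refl) (simp add: mult.commute mult.left_commute)
  finally show "(\<Sum>a<n k. \<Sum>b<n k. U (j(k := a)) * M a b * V (j(k := b))) =
    (\<Sum>a<n k. \<Sum>b<n k. V (j(k := a)) * M a b * U (j(k := b)))" .
qed

lemma tinner_comm: "tinner K n U V = tinner K n V U"
  by (simp add: tinner_def mult.commute)

lemma Tm_comp: "Tm n k M (Tm n k N V) = Tm n k (matmul (n k) M N) V"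
proof
  fix i
  have "Tm n k M (Tm n k N V) i = (\<Sum>b<n k. \<Sum>c<n k. M (i k) b * N b c * V (i(k := c)))"
    by (simp add: Tm_def sum_distrib_left mult.assoc)
  also have "\<dots> = (\<Sum>c<n k. \<Sum>b<n k. M (i k) b * N b c * V (i(k := c)))" by (rule sum.swap)
  also have "\<dots> = Tm n k (matmul (n k) M N) V i"
    by (simp add: Tm_def matmul_def sum_distrib_right)
  finally show "Tm n k M (Tm n k N V) i = Tm n k (matmul (n k) M N) V i" .
qed

lemma Tm_block:
  assumes "i \<in> idx K n" "k < K" "\<forall>a<n k. \<forall>b<n k. M a b = M' a b"
  shows "Tm n k M V i = Tm n k M' V i"
proof -
  have "i k < n k" using assms by (auto simp: idx_def)
  thus ?thesis using assms(3) by (simp add: Tm_def)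
qed

lemma Tm_cong:
  assumes "i \<in> idx K n" "k < K" "\<forall>i\<in>idx K n. V i = V' i"
  shows "Tm n k M V i = Tm n k M V' i"
  unfolding Tm_def using assms upd_idx by (auto intro!: sum.cong)

lemma Tm_lin: "Tm n k M (\<lambda>i. p * U i + q * V i) = (\<lambda>i. p * Tm n k M U i + q * Tm n k M V i)"
  by (simp add: Tm_def fun_eq_iff sum.distrib sum_distrib_left algebra_simps)

lemma tinner_lin_left: "tinner K n (\<lambda>i. p * U i + q * V i) W = p * tinner K n U W + q * tinner K n V W"
  by (simp add: tinner_def sum.distrib sum_distrib_left algebra_simps)
lemma tinner_lin_right: "tinner K n W (\<lambda>i. p * U i + q * V i) = p * tinner K n W U + q * tinner K n W V"
  by (simp add: tinner_def sum.distrib sum_distrib_left algebra_simps)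

lemma psd_Tm:
  assumes "k < K" "spectraplex (n k) \<Theta>"
  shows "0 \<le> tinner K n W (Tm n k \<Theta> W)"
  unfolding unfold_qf_eq[OF assms(1), symmetric] unfold_qf_def
  using assms(2) by (intro sum_nonneg) (simp add: spectraplex_def)

lemma qf_sub:
  "qf d M (\<lambda>b. x b - t * e b) = qf d M x - t * (\<Sum>a<d. \<Sum>b<d. e a * M a b * x b)
     - t * (\<Sum>a<d. \<Sum>b<d. x a * M a b * e b) + t\<^sup>2 * qf d M e"
proof -
  have p: "(x a - t * e a) * M a b * (x b - t * e b) =
     x a * M a b * x b - t * (e a * M a b * x b) - t * (x a * M a b * e b) + t\<^sup>2 * (e a * M a b * e b)"
    for a b by (simp add: algebra_simps power2_eq_square)
  show ?thesis unfolding qf_def p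
    by (simp add: sum.distrib sum_subtractf sum_distrib_left)
qed

lemma discr:
  fixes q u c :: real
  assumes h: "\<And>t. 0 \<le> q - 2 * t * u + t\<^sup>2 * c" and c: "0 \<le> c"
  shows "u\<^sup>2 \<le> c * q"
proof (cases "c > 0")
  case True
  have "0 \<le> q - 2 * (u / c) * u + (u / c)\<^sup>2 * c" by (rule h)
  also have "\<dots> = q - u\<^sup>2 / c" using True by (simp add: field_simps power2_eq_square)
  finally show ?thesis using True by (simp add: field_simps)
next
  case False
  hence c0: "c = 0" using c by simp
  show ?thesis
  proof (cases "u = 0")
    case True thus ?thesis using c0 by simp
  next
    case False
    have "0 \<le> q - 2 * ((q + 1) / (2 * u)) * u + ((q + 1) / (2 * u))\<^sup>2 * c" by (rule h)
    also have "\<dots> = -1" using False c0 by (simp add: field_simps)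
    finally show ?thesis by simp
  qed
qed

lemma dl: "(if x = a then 1 else 0) * (f::real) = (if x = a then f else 0)" by simp
lemma dr: "(f::real) * (if x = a then 1 else 0) = (if x = a then f else 0)" by simp

lemma sum_delta_left: "a < (d::nat) \<Longrightarrow> (\<Sum>a'<d. (if a' = a then 1 else 0) * (f a' :: real)) = f a"
  by (simp only: dl, subst sum.delta) auto

lemma psd_cs_row:
  assumes sp: "spectraplex d \<Theta>" and a: "a < d"
  shows "(\<Sum>b<d. \<Theta> a b * x b)\<^sup>2 \<le> \<Theta> a a * qf d \<Theta> x"
proof -
  define e where "e = (\<lambda>b::nat. if b = a then 1 else (0::real))"
  have sym: "\<forall>i<d. \<forall>j<d. \<Theta> i j = \<Theta> j i" using sp by (simp add: spectraplex_def)
  have e1: "(\<Sum>a'<d. \<Sum>b<d. e a' * \<Theta> a' b * x b) = (\<Sum>b<d. \<Theta> a b * x b)"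
    unfolding e_def using sum_delta_left[OF a, of "\<lambda>a'. \<Sum>b<d. \<Theta> a' b * x b"]
    by (simp add: sum_distrib_left mult.assoc)
  have e2: "(\<Sum>a'<d. \<Sum>b<d. x a' * \<Theta> a' b * e b) = (\<Sum>b<d. \<Theta> a b * x b)"
  proof -
    have "(\<Sum>a'<d. \<Sum>b<d. x a' * \<Theta> a' b * e b) = (\<Sum>a'<d. x a' * \<Theta> a' a)"
      unfolding e_def using a
      by (intro sum.cong refl) (simp add: dl dr sum.delta)
    also have "\<dots> = (\<Sum>b<d. \<Theta> a b * x b)" using sym a by (intro sum.cong refl) (auto simp: mult.commute)
    finally show ?thesis .
  qed
  have e3: "qf d \<Theta> e = \<Theta> a a"
    unfolding qf_def e_def using a
    by (simp add: dl dr sum.delta)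
  have c: "0 \<le> \<Theta> a a" using sp e3 by (metis spectraplex_def)
  show ?thesis
  proof (rule discr[OF _ c])
    fix t
    have "0 \<le> qf d \<Theta> (\<lambda>b. x b - t * e b)" using sp by (simp add: spectraplex_def)
    thus "0 \<le> qf d \<Theta> x - 2 * t * (\<Sum>b<d. \<Theta> a b * x b) + t\<^sup>2 * \<Theta> a a"
      unfolding qf_sub e1 e2 e3 by simp
  qed
qed

lemma psd_cs:
  assumes sp: "spectraplex d \<Theta>"
  shows "(\<Sum>a<d. (\<Sum>b<d. \<Theta> a b * x b)\<^sup>2) \<le> qf d \<Theta> x"
proof -
  have "(\<Sum>a<d. (\<Sum>b<d. \<Theta> a b * x b)\<^sup>2) \<le> (\<Sum>a<d. \<Theta> a a * qf d \<Theta> x)"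
    using psd_cs_row[OF sp] by (intro sum_mono) auto
  also have "\<dots> = qf d \<Theta> x" using sp by (simp add: spectraplex_def sum_distrib_right[symmetric])
  finally show ?thesis .
qed

lemma coerc_Tm:
  assumes k: "k < K" and sp: "spectraplex (n k) \<Theta>"
  shows "tinner K n (Tm n k \<Theta> x) (Tm n k \<Theta> x) \<le> tinner K n x (Tm n k \<Theta> x)"
proof -
  have "tinner K n (Tm n k \<Theta> x) (Tm n k \<Theta> x)
      = (\<Sum>j\<in>fibers K n k. \<Sum>a<n k. (\<Sum>b<n k. \<Theta> a b * x (j(k := b)))\<^sup>2)"
    unfolding tinner_def sum_idx_fibers[OF k] by (simp add: Tm_def power2_eq_square)
  also have "\<dots> \<le> (\<Sum>j\<in>fibers K n k. qf (n k) \<Theta> (fiber k x j))"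
    by (intro sum_mono) (use psd_cs[OF sp] in \<open>simp add: fiber_def\<close>)
  also have "\<dots> = tinner K n x (Tm n k \<Theta> x)"
    using unfold_qf_eq[OF k] by (simp add: unfold_qf_def)
  finally show ?thesis .
qed

lemma tinner_cong:
  "(\<forall>i\<in>idx K n. U i = U' i) \<Longrightarrow> (\<forall>i\<in>idx K n. V i = V' i) \<Longrightarrow> tinner K n U V = tinner K n U' V'"
  by (simp add: tinner_def)

lemma pinvB:
  assumes sp: "spectraplex d \<Theta>"
  shows "\<forall>a<d. \<forall>b<d. matmul d (matmul d \<Theta> (pinv d \<Theta>)) \<Theta> a b = \<Theta> a b"
    "\<forall>a<d. \<forall>b<d. matmul d (matmul d (pinv d \<Theta>) \<Theta>) (pinv d \<Theta>) a b = pinv d \<Theta> a b"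
    "\<forall>a b. pinv d \<Theta> a b = pinv d \<Theta> b a"
proof -
  have sym: "\<forall>i<d. \<forall>j<d. \<Theta> i j = \<Theta> j i" using sp by (simp add: spectraplex_def)
  note E = pinv_eq[OF sym]
  show "\<forall>a<d. \<forall>b<d. matmul d (matmul d \<Theta> (pinv d \<Theta>)) \<Theta> a b = \<Theta> a b"
    "\<forall>a<d. \<forall>b<d. matmul d (matmul d (pinv d \<Theta>) \<Theta>) (pinv d \<Theta>) a b = pinv d \<Theta> a b"
    using E(2) by (simp_all add: is_pinv_def)
  have "mtr (pinv_X d \<Theta>) = pinv_X d \<Theta>" using pinv_X_props[OF sym] by simp
  thus "\<forall>a b. pinv d \<Theta> a b = pinv d \<Theta> b a" unfolding E(1)
    by (metis mtr_def)
qed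

lemma range_tensor:
  assumes k: "k < K"
  shows "(\<forall>j\<in>fibers K n k. in_range (n k) \<Theta> (fiber k W j)) \<longleftrightarrow> (\<exists>x. \<forall>i\<in>idx K n. W i = Tm n k \<Theta> x i)"
proof
  assume h: "\<forall>j\<in>fibers K n k. in_range (n k) \<Theta> (fiber k W j)"
  then obtain xf where xf: "\<forall>j\<in>fibers K n k. \<forall>a<n k. (\<Sum>b<n k. \<Theta> a b * xf j b) = W (j(k := a))"
    unfolding in_range_def fiber_def by metis
  define x where "x = (\<lambda>i. xf (i(k := 0)) (i k))"
  have "W i = Tm n k \<Theta> x i" if i: "i \<in> idx K n" for i
  proof -
    have ik: "i k < n k" using i k by (auto simp: idx_def)
    have j: "i(k := 0) \<in> fibers K n k" using i k ik by (auto simp: fibers_def intro!: upd_idx)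
    have "Tm n k \<Theta> x i = (\<Sum>b<n k. \<Theta> (i k) b * xf (i(k := 0)) b)" by (simp add: Tm_def x_def)
    also have "\<dots> = W ((i(k := 0))(k := i k))" using xf j ik by blast
    finally show ?thesis by simp
  qed
  thus "\<exists>x. \<forall>i\<in>idx K n. W i = Tm n k \<Theta> x i" by (intro exI[of _ x]) blast
next
  assume "\<exists>x. \<forall>i\<in>idx K n. W i = Tm n k \<Theta> x i"
  then obtain x where x: "\<forall>i\<in>idx K n. W i = Tm n k \<Theta> x i" by blast
  show "\<forall>j\<in>fibers K n k. in_range (n k) \<Theta> (fiber k W j)"
  proof
    fix j assume j: "j \<in> fibers K n k"
    have "\<forall>a<n k. (\<Sum>b<n k. \<Theta> a b * x (j(k := b))) = fiber k W j a"
    proof (intro allI impI)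
      fix a assume a: "a < n k"
      have "j(k := a) \<in> idx K n" using j k a upd_idx by (auto simp: fibers_def)
      thus "(\<Sum>b<n k. \<Theta> a b * x (j(k := b))) = fiber k W j a"
        using x by (simp add: fiber_def Tm_def)
    qed
    thus "in_range (n k) \<Theta> (fiber k W j)" unfolding in_range_def
      by (intro exI[of _ "\<lambda>b. x (j(k := b))"])
  qed
qed

definition inR :: "nat \<Rightarrow> (nat \<Rightarrow> nat) \<Rightarrow> nat \<Rightarrow> (nat \<Rightarrow> nat \<Rightarrow> real) \<Rightarrow> ((nat \<Rightarrow> nat) \<Rightarrow> real) \<Rightarrow> bool" where
  "inR K n k \<Theta> W \<longleftrightarrow> (\<forall>i\<in>idx K n. Tm n k \<Theta> (Tm n k (pinv (n k) \<Theta>) W) i = W i)"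

lemma TXT:
  assumes k: "k < K" and sp: "spectraplex (n k) \<Theta>" and i: "i \<in> idx K n"
  shows "Tm n k \<Theta> (Tm n k (pinv (n k) \<Theta>) (Tm n k \<Theta> x)) i = Tm n k \<Theta> x i"
  unfolding Tm_comp using pinvB(1)[OF sp] by (intro Tm_block[OF i k]) (simp add: matmul_assoc)

lemma inR_iff:
  assumes k: "k < K" and sp: "spectraplex (n k) \<Theta>"
  shows "inR K n k \<Theta> W \<longleftrightarrow> (\<exists>x. \<forall>i\<in>idx K n. W i = Tm n k \<Theta> x i)"
proof
  assume "inR K n k \<Theta> W" thus "\<exists>x. \<forall>i\<in>idx K n. W i = Tm n k \<Theta> x i"
    unfolding inR_def by (metis)
next
  assume "\<exists>x. \<forall>i\<in>idx K n. W i = Tm n k \<Theta> x i"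
  then obtain x where x: "\<forall>i\<in>idx K n. W i = Tm n k \<Theta> x i" by blast
  show "inR K n k \<Theta> W" unfolding inR_def
  proof
    fix i assume i: "i \<in> idx K n"
    have "Tm n k (pinv (n k) \<Theta>) W j = Tm n k (pinv (n k) \<Theta>) (Tm n k \<Theta> x) j" if "j \<in> idx K n" for j
      using Tm_cong[OF that k] x by auto
    hence "Tm n k \<Theta> (Tm n k (pinv (n k) \<Theta>) W) i = Tm n k \<Theta> (Tm n k (pinv (n k) \<Theta>) (Tm n k \<Theta> x)) i"
      using Tm_cong[OF i k] by auto
    also have "\<dots> = Tm n k \<Theta> x i" by (rule TXT[OF k sp i])
    finally show "Tm n k \<Theta> (Tm n k (pinv (n k) \<Theta>) W) i = W i" using x i by simp
  qed
qed

lemma inR_range: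
  assumes k: "k < K" and sp: "spectraplex (n k) \<Theta>"
  shows "inR K n k \<Theta> W \<longleftrightarrow> (\<forall>j\<in>fibers K n k. in_range (n k) \<Theta> (fiber k W j))"
  using inR_iff[where K=K and n=n and k=k and \<Theta>=\<Theta> and W=W, OF k sp] range_tensor[OF k] by simp

lemma tinner_sum_right: "tinner K n V (\<lambda>i. \<Sum>k<K'. W k i) = (\<Sum>k<K'. tinner K n V (W k))"
  unfolding tinner_def by (simp add: sum_distrib_left sum.swap[of _ "idx K n"])

lemma wd_k:
  assumes k: "k < K" and sp: "spectraplex (n k) \<Theta>" and R: "inR K n k \<Theta> W" and lam: "lam > 0"
  shows "tinner K n v W \<le> 1 / (2 * lam) * tinner K n W (Tm n k (pinv (n k) \<Theta>) W)
           + lam / 2 * tinner K n v (Tm n k \<Theta> v)"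
proof -
  define x where "x = Tm n k (pinv (n k) \<Theta>) W"
  have Wx: "\<forall>i\<in>idx K n. W i = Tm n k \<Theta> x i" using R by (simp add: inR_def x_def)
  have symT: "\<forall>a<n k. \<forall>b<n k. \<Theta> a b = \<Theta> b a" using sp by (simp add: spectraplex_def)
  define A where "A = tinner K n v (Tm n k \<Theta> v)"
  define B where "B = tinner K n v (Tm n k \<Theta> x)"
  define Q where "Q = tinner K n x (Tm n k \<Theta> x)"
  have q: "tinner K n W (Tm n k (pinv (n k) \<Theta>) W) = Q"
  proof -
    have "tinner K n W (Tm n k (pinv (n k) \<Theta>) W) = tinner K n (Tm n k \<Theta> x) x"
      unfolding x_def[symmetric] by (rule tinner_cong) (use Wx in auto)
    thus ?thesis by (simp add: Q_def tinner_comm)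
  qed
  have b: "tinner K n v W = B" unfolding B_def by (rule tinner_cong) (use Wx in auto)
  define u where "u = (\<lambda>i. lam * v i + (-1) * x i)"
  have "0 \<le> tinner K n u (Tm n k \<Theta> u)" by (rule psd_Tm[where n=n, OF k sp])
  also have "tinner K n u (Tm n k \<Theta> u) = lam * lam * A - lam * B - lam * tinner K n x (Tm n k \<Theta> v) + Q"
    unfolding u_def Tm_lin tinner_lin_left tinner_lin_right A_def B_def Q_def by (simp add: algebra_simps)
  also have "tinner K n x (Tm n k \<Theta> v) = B" unfolding B_def by (rule tinner_Tm_sym[where n=n, OF k symT])
  finally have "0 \<le> lam * lam * A - 2 * lam * B + Q" by (simp add: algebra_simps)
  hence "2 * lam * B \<le> lam * lam * A + Q" by simp
  hence "B \<le> lam / 2 * A + Q / (2 * lam)" using lam by (simp add: field_simps)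
  thus ?thesis using q b A_def by simp
qed

lemma R_nonneg:
  assumes k: "k < K" and sp: "spectraplex (n k) \<Theta>" and R: "inR K n k \<Theta> W"
  shows "0 \<le> tinner K n W (Tm n k (pinv (n k) \<Theta>) W)"
    "tinner K n W W \<le> tinner K n W (Tm n k (pinv (n k) \<Theta>) W)"
proof -
  define x where "x = Tm n k (pinv (n k) \<Theta>) W"
  have Wx: "\<forall>i\<in>idx K n. W i = Tm n k \<Theta> x i" using R by (simp add: inR_def x_def)
  have q: "tinner K n W (Tm n k (pinv (n k) \<Theta>) W) = tinner K n x (Tm n k \<Theta> x)"
  proof -
    have "tinner K n W (Tm n k (pinv (n k) \<Theta>) W) = tinner K n (Tm n k \<Theta> x) x"
      unfolding x_def[symmetric] by (rule tinner_cong) (use Wx in auto)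
    thus ?thesis by (simp add: tinner_comm)
  qed
  show "0 \<le> tinner K n W (Tm n k (pinv (n k) \<Theta>) W)" unfolding q by (rule psd_Tm[where n=n, OF k sp])
  have "tinner K n W W = tinner K n (Tm n k \<Theta> x) (Tm n k \<Theta> x)"
    by (rule tinner_cong) (use Wx in auto)
  also have "\<dots> \<le> tinner K n x (Tm n k \<Theta> x)" by (rule coerc_Tm[where n=n, OF k sp])
  finally show "tinner K n W W \<le> tinner K n W (Tm n k (pinv (n k) \<Theta>) W)" unfolding q .
qed

definition Fobj where
  "Fobj K n \<Omega> Y C lam \<Theta> Wf =
     C * tnorm2 K n (\<lambda>i. restr \<Omega> (\<lambda>i. \<Sum>k<K. Wf k i) i - restr \<Omega> Y i)
     + (\<Sum>k<K. 1 / (2 * lam k) * tinner K n (Wf k) (Tm n k (pinv (n k) (\<Theta> k)) (Wf k)))"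

lemma weak_real:
  assumes sp: "\<forall>k<K. spectraplex (n k) (\<Theta> k)" and R: "\<forall>k<K. inR K n k (\<Theta> k) (Wf k)"
    and lam: "\<forall>k<K. lam k > 0" and C: "C > 0"
    and W0: "\<forall>i\<in>idx K n. 0 \<le> (\<Sum>k<K. Wf k i)"
    and Z: "\<forall>i\<in>idx K n. Z i = restr \<Omega> Z i" and S: "\<forall>i\<in>idx K n. 0 \<le> S i"
  shows "dual_obj K n \<Omega> Y C lam \<Theta> Z S \<le> Fobj K n \<Omega> Y C lam \<Theta> Wf"
proof -
  define v where "v = (\<lambda>i. Z i + S i)"
  define SW where "SW = (\<lambda>i. \<Sum>k<K. Wf k i)"
  define r where "r = (\<lambda>i. restr \<Omega> SW i - restr \<Omega> Y i)"
  have uq: "unfold_qf K n k (\<Theta> k) v = tinner K n v (Tm n k (\<Theta> k) v)" if "k < K" for k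
    by (rule unfold_qf_eq[OF that])
  have "(\<Sum>k<K. tinner K n v (Wf k)) \<le>
        (\<Sum>k<K. 1 / (2 * lam k) * tinner K n (Wf k) (Tm n k (pinv (n k) (\<Theta> k)) (Wf k))
               + lam k / 2 * tinner K n v (Tm n k (\<Theta> k) v))"
    using wd_k sp R lam by (intro sum_mono) auto
  also have "(\<Sum>k<K. tinner K n v (Wf k)) = tinner K n v SW"
    unfolding SW_def tinner_sum_right ..
  finally have I1: "tinner K n v SW \<le> (\<Sum>k<K. 1 / (2 * lam k) * tinner K n (Wf k) (Tm n k (pinv (n k) (\<Theta> k)) (Wf k)))
               + (\<Sum>k<K. lam k / 2 * tinner K n v (Tm n k (\<Theta> k) v))"
    by (simp add: sum.distrib)
  have I2: "tinner K n Z (restr \<Omega> SW) \<le> tinner K n v SW"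
  proof -
    have "tinner K n Z (restr \<Omega> SW) = tinner K n Z SW"
      unfolding tinner_def using Z by (intro sum.cong refl) (auto simp: restr_def)
    also have "\<dots> \<le> tinner K n Z SW + tinner K n S SW"
      using S W0 unfolding tinner_def SW_def by (simp add: sum_nonneg)
    also have "\<dots> = tinner K n v SW" by (simp add: tinner_def v_def sum.distrib algebra_simps)
    finally show ?thesis .
  qed
  have I3: "0 \<le> C * tnorm2 K n r + 1 / (4 * C) * tnorm2 K n Z - tinner K n Z (restr \<Omega> Y)
              + tinner K n Z (restr \<Omega> SW)"
  proof -
    have "C * tnorm2 K n r + 1 / (4 * C) * tnorm2 K n Z - tinner K n Z (restr \<Omega> Y)
              + tinner K n Z (restr \<Omega> SW) = (\<Sum>i\<in>idx K n. (2 * C * r i + Z i)\<^sup>2 / (4 * C))"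
      unfolding tnorm2_def tinner_def using C
      by (simp add: r_def sum_distrib_left sum_divide_distrib sum.distrib[symmetric] sum_subtractf[symmetric]
          power2_eq_square field_simps)
    also have "\<dots> \<ge> 0" using C by (intro sum_nonneg) simp
    finally show ?thesis by simp
  qed
  have "dual_obj K n \<Omega> Y C lam \<Theta> Z S = tinner K n Z (restr \<Omega> Y) - 1 / (4 * C) * tnorm2 K n Z
        - (\<Sum>k<K. lam k / 2 * tinner K n v (Tm n k (\<Theta> k) v))"
    unfolding dual_obj_def v_def[symmetric] using uq by simp
  also have "\<dots> \<le> Fobj K n \<Omega> Y C lam \<Theta> Wf"
    unfolding Fobj_def SW_def[symmetric] r_def[symmetric] using I1 I2 I3 by linarith
  finally show ?thesis .
qed

lemma abs_le_sq: "\<bar>x::real\<bar> \<le> 1 + x\<^sup>2"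
proof (cases "\<bar>x\<bar> \<le> 1")
  case True thus ?thesis by (simp add: add_increasing2)
next
  case False
  hence "\<bar>x\<bar> * 1 \<le> \<bar>x\<bar> * \<bar>x\<bar>" by (intro mult_left_mono) auto
  thus ?thesis by (simp add: abs_mult_self_eq power2_eq_square)
qed

lemma bw_finite:
  fixes x :: "nat \<Rightarrow> 'i \<Rightarrow> real"
  assumes "finite I" and bnd: "\<And>j p. p \<in> I \<Longrightarrow> \<bar>x j p\<bar> \<le> B p"
  shows "\<exists>r L. strict_mono r \<and> (\<forall>p\<in>I. (\<lambda>j. x (r j) p) \<longlonglongrightarrow> L p)"
  using assms(1) bnd
proof (induction I rule: finite_induct)
  case empty
  show ?case by (intro exI[of _ id] exI[of _ "\<lambda>_. 0"]) (simp add: strict_mono_def)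
next
  case (insert q I)
  from insert.IH insert.prems obtain r L where r: "strict_mono r"
    and L: "\<forall>p\<in>I. (\<lambda>j. x (r j) p) \<longlonglongrightarrow> L p" by blast
  obtain f where f: "strict_mono f" and mono: "monoseq (\<lambda>j. x (r (f j)) q)"
    using seq_monosub[of "\<lambda>j. x (r j) q"] by blast
  have "Bseq (\<lambda>j. x (r (f j)) q)" using insert.prems by (intro BseqI'[of _ "B q"]) auto
  hence "convergent (\<lambda>j. x (r (f j)) q)" using mono by (rule Bseq_monoseq_convergent)
  then obtain l where l: "(\<lambda>j. x (r (f j)) q) \<longlonglongrightarrow> l" by (auto simp: convergent_def)
  have "\<forall>p\<in>insert q I. (\<lambda>j. x ((r \<circ> f) j) p) \<longlonglongrightarrow> (L(q := l)) p"
  proof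
    fix p assume p: "p \<in> insert q I"
    show "(\<lambda>j. x ((r \<circ> f) j) p) \<longlonglongrightarrow> (L(q := l)) p"
    proof (cases "p = q")
      case True thus ?thesis using l by simp
    next
      case False
      hence "p \<in> I" using p by simp
      hence "((\<lambda>j. x (r j) p) \<circ> f) \<longlonglongrightarrow> L p" using L f by (intro LIMSEQ_subseq_LIMSEQ) auto
      thus ?thesis using False by (simp add: comp_def)
    qed
  qed
  thus ?case using strict_mono_o[OF r f] by blast
qed

lemma conv_Tm:
  assumes k: "k < K" and i: "i \<in> idx K n"
    and c: "\<forall>i\<in>idx K n. (\<lambda>j. U j i) \<longlonglongrightarrow> U' i"
  shows "(\<lambda>j. Tm n k M (U j) i) \<longlonglongrightarrow> Tm n k M U' i"
  unfolding Tm_def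
proof (intro tendsto_sum tendsto_mult_left)
  fix b assume "b \<in> {..<n k}"
  hence "i(k := b) \<in> idx K n" using i k upd_idx by auto
  thus "(\<lambda>j. U j (i(k := b))) \<longlonglongrightarrow> U' (i(k := b))" using c by blast
qed

lemma conv_tinner:
  assumes "\<forall>i\<in>idx K n. (\<lambda>j. U j i) \<longlonglongrightarrow> U' i" "\<forall>i\<in>idx K n. (\<lambda>j. V j i) \<longlonglongrightarrow> V' i"
  shows "(\<lambda>j. tinner K n (U j) (V j)) \<longlonglongrightarrow> tinner K n U' V'"
  unfolding tinner_def using assms by (intro tendsto_sum tendsto_mult) auto

definition Feas where
  "Feas K n \<Theta> = {Wf. (\<forall>k<K. inR K n k (\<Theta> k) (Wf k)) \<and> (\<forall>i\<in>idx K n. 0 \<le> (\<Sum>k<K. Wf k i))}"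

lemma zero_Feas: "(\<lambda>k i. 0) \<in> Feas K n \<Theta>"
  by (simp add: Feas_def inR_def Tm_def)

lemma F_nonneg_terms:
  assumes sp: "\<forall>k<K. spectraplex (n k) (\<Theta> k)" and lam: "\<forall>k<K. lam k > 0" and C: "C > 0"
    and W: "Wf \<in> Feas K n \<Theta>"
  shows "0 \<le> Fobj K n \<Omega> Y C lam \<Theta> Wf"
    "\<And>k i. k < K \<Longrightarrow> i \<in> idx K n \<Longrightarrow> (Wf k i)\<^sup>2 \<le> 2 * lam k * Fobj K n \<Omega> Y C lam \<Theta> Wf"
proof -
  define q where "q = (\<lambda>k. tinner K n (Wf k) (Tm n k (pinv (n k) (\<Theta> k)) (Wf k)))"
  have R: "\<forall>k<K. inR K n k (\<Theta> k) (Wf k)" using W by (simp add: Feas_def)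
  have q0: "0 \<le> q k" if "k < K" for k
    unfolding q_def using R_nonneg(1)[where n=n, OF that] sp R that by blast
  have n0: "0 \<le> C * tnorm2 K n (\<lambda>i. restr \<Omega> (\<lambda>i. \<Sum>k<K. Wf k i) i - restr \<Omega> Y i)"
    unfolding tnorm2_def tinner_def using C by (intro mult_nonneg_nonneg[OF less_imp_le[OF C]] sum_nonneg) simp
  have F: "Fobj K n \<Omega> Y C lam \<Theta> Wf = C * tnorm2 K n (\<lambda>i. restr \<Omega> (\<lambda>i. \<Sum>k<K. Wf k i) i - restr \<Omega> Y i)
      + (\<Sum>k<K. 1 / (2 * lam k) * q k)" by (simp add: Fobj_def q_def)
  have t0: "0 \<le> 1 / (2 * lam k) * q k" if "k < K" for k
  proof -
    have "0 < lam k" using lam that by simp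
    thus ?thesis using q0[OF that] by simp
  qed
  have "0 \<le> (\<Sum>k<K. 1 / (2 * lam k) * q k)" using t0 by (intro sum_nonneg) auto
  thus "0 \<le> Fobj K n \<Omega> Y C lam \<Theta> Wf" unfolding F using n0 by linarith
  fix k i assume k: "k < K" and i: "i \<in> idx K n"
  have "(Wf k i)\<^sup>2 \<le> (\<Sum>i\<in>idx K n. Wf k i * Wf k i)"
    using member_le_sum[OF i, of "\<lambda>i. Wf k i * Wf k i"] finite_idx by (simp add: power2_eq_square)
  also have "\<dots> \<le> q k" using R_nonneg(2)[where n=n, OF k] sp R k by (simp add: q_def tinner_def)
  also have "\<dots> = 2 * lam k * (1 / (2 * lam k) * q k)"
  proof -
    have "lam k > 0" using lam k by simp
    thus ?thesis by simp
  qed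
  also have "1 / (2 * lam k) * q k \<le> (\<Sum>k<K. 1 / (2 * lam k) * q k)"
    using member_le_sum[of k "{..<K}" "\<lambda>k. 1 / (2 * lam k) * q k"] t0 k by simp
  hence "2 * lam k * (1 / (2 * lam k) * q k) \<le> 2 * lam k * Fobj K n \<Omega> Y C lam \<Theta> Wf"
    unfolding F using n0 lam k by (intro mult_left_mono) auto
  finally show "(Wf k i)\<^sup>2 \<le> 2 * lam k * Fobj K n \<Omega> Y C lam \<Theta> Wf" .
qed

lemma exists_min:
  assumes sp: "\<forall>k<K. spectraplex (n k) (\<Theta> k)" and lam: "\<forall>k<K. lam k > 0" and C: "C > 0"
  shows "\<exists>W\<in>Feas K n \<Theta>. \<forall>V\<in>Feas K n \<Theta>. Fobj K n \<Omega> Y C lam \<Theta> W \<le> Fobj K n \<Omega> Y C lam \<Theta> V"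
proof -
  define F where "F = Fobj K n \<Omega> Y C lam \<Theta>"
  define FS where "FS = F ` Feas K n \<Theta>"
  define m where "m = Inf FS"
  have ne: "FS \<noteq> {}" using zero_Feas FS_def by blast
  have bdd: "bdd_below FS" unfolding FS_def F_def using F_nonneg_terms(1)[OF sp lam C]
    by (intro bdd_belowI[of _ 0]) auto
  have "\<forall>j. \<exists>W\<in>Feas K n \<Theta>. F W < m + inverse (real (Suc j))"
  proof
    fix j :: nat
    have "m < m + inverse (real (Suc j))" by simp
    hence "\<exists>x\<in>FS. x < m + inverse (real (Suc j))" using cInf_less_iff[OF ne bdd] m_def by blast
    thus "\<exists>W\<in>Feas K n \<Theta>. F W < m + inverse (real (Suc j))" by (auto simp: FS_def)
  qed
  then obtain Ws where Ws: "\<And>j. Ws j \<in> Feas K n \<Theta>" "\<And>j. F (Ws j) < m + inverse (real (Suc j))"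
    by metis
  have Fb: "F (Ws j) \<le> m + 1" for j
  proof -
    have "inverse (real (Suc j)) \<le> 1" by (simp add: inverse_le_1_iff)
    thus ?thesis using Ws(2)[of j] by simp
  qed
  have bnd: "\<bar>Ws j k i\<bar> \<le> 1 + 2 * lam k * (m + 1)" if p: "(k, i) \<in> {..<K} \<times> idx K n" for j k i
  proof -
    have k: "k < K" and i: "i \<in> idx K n" using p by auto
    have "\<bar>Ws j k i\<bar> \<le> 1 + (Ws j k i)\<^sup>2"
      by (rule abs_le_sq)
    also have "(Ws j k i)\<^sup>2 \<le> 2 * lam k * F (Ws j)"
      using F_nonneg_terms(2)[OF sp lam C Ws(1) k i] by (simp add: F_def)
    also have "\<dots> \<le> 2 * lam k * (m + 1)" using Fb lam k by (intro mult_left_mono) auto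
    finally show ?thesis by simp
  qed
  have "\<exists>r L. strict_mono r \<and> (\<forall>p\<in>{..<K} \<times> idx K n. (\<lambda>j. (\<lambda>j (k, i). Ws j k i) (r j) p) \<longlonglongrightarrow> L p)"
    by (rule bw_finite[of "{..<K} \<times> idx K n" "\<lambda>j (k, i). Ws j k i" "\<lambda>(k, i). 1 + 2 * lam k * (m + 1)"])
      (use bnd finite_idx in auto)
  then obtain r L where r: "strict_mono r" and L: "\<forall>p\<in>{..<K} \<times> idx K n. (\<lambda>j. (\<lambda>j (k, i). Ws j k i) (r j) p) \<longlonglongrightarrow> L p"
    by blast
  define W where "W = (\<lambda>k i. L (k, i))"
  have cv: "\<forall>i\<in>idx K n. (\<lambda>j. Ws (r j) k i) \<longlonglongrightarrow> W k i" if "k < K" for k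
  proof
    fix i assume "i \<in> idx K n"
    hence "(k, i) \<in> {..<K} \<times> idx K n" using that by simp
    thus "(\<lambda>j. Ws (r j) k i) \<longlonglongrightarrow> W k i" using L[rule_format, of "(k, i)"] by (simp add: W_def)
  qed
  have WF: "W \<in> Feas K n \<Theta>" unfolding Feas_def
  proof (intro CollectI conjI allI impI ballI)
    fix k assume k: "k < K"
    show "inR K n k (\<Theta> k) (W k)" unfolding inR_def
    proof
      fix i assume i: "i \<in> idx K n"
      have c1: "\<forall>i\<in>idx K n. (\<lambda>j. Tm n k (pinv (n k) (\<Theta> k)) (Ws (r j) k) i) \<longlonglongrightarrow> Tm n k (pinv (n k) (\<Theta> k)) (W k) i"
        using conv_Tm[OF k _ cv[OF k]] by blast
      have "(\<lambda>j. Tm n k (\<Theta> k) (Tm n k (pinv (n k) (\<Theta> k)) (Ws (r j) k)) i) \<longlonglongrightarrow> Tm n k (\<Theta> k) (Tm n k (pinv (n k) (\<Theta> k)) (W k)) i"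
        by (rule conv_Tm[OF k i c1])
      moreover have "(\<lambda>j. Tm n k (\<Theta> k) (Tm n k (pinv (n k) (\<Theta> k)) (Ws (r j) k)) i) = (\<lambda>j. Ws (r j) k i)"
        using Ws(1) i k by (auto simp: Feas_def inR_def)
      ultimately show "Tm n k (\<Theta> k) (Tm n k (pinv (n k) (\<Theta> k)) (W k)) i = W k i"
        using cv[OF k] i LIMSEQ_unique by fastforce
    qed
  next
    fix i assume i: "i \<in> idx K n"
    have "(\<lambda>j. \<Sum>k<K. Ws (r j) k i) \<longlonglongrightarrow> (\<Sum>k<K. W k i)"
      using cv i by (intro tendsto_sum) auto
    moreover have "\<forall>j. 0 \<le> (\<Sum>k<K. Ws (r j) k i)" using Ws(1) i by (auto simp: Feas_def)
    ultimately show "0 \<le> (\<Sum>k<K. W k i)" by (intro LIMSEQ_le_const) auto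
  qed
  have cF: "(\<lambda>j. F (Ws (r j))) \<longlonglongrightarrow> F W"
  proof -
    have c2: "\<forall>i\<in>idx K n. (\<lambda>j. restr \<Omega> (\<lambda>i. \<Sum>k<K. Ws (r j) k i) i - restr \<Omega> Y i) \<longlonglongrightarrow>
        restr \<Omega> (\<lambda>i. \<Sum>k<K. W k i) i - restr \<Omega> Y i"
      using cv unfolding restr_def by (auto intro!: tendsto_intros)
    have c3: "(\<lambda>j. tinner K n (Ws (r j) k) (Tm n k (pinv (n k) (\<Theta> k)) (Ws (r j) k)))
        \<longlonglongrightarrow> tinner K n (W k) (Tm n k (pinv (n k) (\<Theta> k)) (W k))" if k: "k < K" for k
      using cv[OF k] conv_Tm[OF k _ cv[OF k]] by (intro conv_tinner) auto
    show ?thesis unfolding F_def Fobj_def tnorm2_def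
      by (intro tendsto_add tendsto_mult_left tendsto_sum conv_tinner c2 c3) auto
  qed
  have "F W \<le> m"
  proof (rule LIMSEQ_le[OF cF])
    show "(\<lambda>j. m + inverse (real (Suc (r j)))) \<longlonglongrightarrow> m"
    proof -
      have "(\<lambda>j. inverse (real (Suc (r j)))) \<longlonglongrightarrow> 0"
        using LIMSEQ_subseq_LIMSEQ[OF LIMSEQ_inverse_real_of_nat r] by (simp add: comp_def)
      from tendsto_add[OF tendsto_const[of m] this] show ?thesis by simp
    qed
    show "\<exists>N. \<forall>n\<ge>N. F (Ws (r n)) \<le> m + inverse (real (Suc (r n)))"
      using Ws(2) less_imp_le by blast
  qed
  moreover have "m \<le> F V" if "V \<in> Feas K n \<Theta>" for V
    unfolding m_def FS_def using that bdd FS_def by (intro cInf_lower) auto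
  ultimately show ?thesis using WF unfolding F_def by (meson order_trans)
qed

lemma tnorm2_lin: "tnorm2 K n (\<lambda>i. r i + t * d i) = tnorm2 K n r + 2 * t * tinner K n r d + t\<^sup>2 * tnorm2 K n d"
  unfolding tnorm2_def tinner_def
  by (simp add: sum.distrib sum_distrib_left algebra_simps power2_eq_square)

lemma gap_identity:
  fixes C :: real and \<Omega> :: "(nat \<Rightarrow> nat) set" and SW Y Z :: "(nat \<Rightarrow> nat) \<Rightarrow> real"
  assumes C: "C > 0"
  defines "r \<equiv> (\<lambda>i. restr \<Omega> SW i - restr \<Omega> Y i)"
  shows "C * tnorm2 K n r + 1 / (4 * C) * tnorm2 K n Z - tinner K n Z (restr \<Omega> Y)
              + tinner K n Z (restr \<Omega> SW) = (\<Sum>i\<in>idx K n. (2 * C * r i + Z i)\<^sup>2 / (4 * C))"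
  unfolding tnorm2_def tinner_def using C
  by (simp add: r_def sum_distrib_left sum_divide_distrib sum.distrib[symmetric] sum_subtractf[symmetric]
          power2_eq_square field_simps)

context
  fixes K :: nat and n :: "nat \<Rightarrow> nat" and \<Omega> :: "(nat \<Rightarrow> nat) set"
    and Y :: "(nat \<Rightarrow> nat) \<Rightarrow> real" and C :: real and lam :: "nat \<Rightarrow> real"
    and \<Theta> :: "nat \<Rightarrow> nat \<Rightarrow> nat \<Rightarrow> real"
  assumes sp: "\<forall>k<K. spectraplex (n k) (\<Theta> k)" and lam: "\<forall>k<K. lam k > 0" and C: "C > 0"
begin

abbreviation "F \<equiv> Fobj K n \<Omega> Y C lam \<Theta>"
abbreviation "XX k \<equiv> pinv (n k) (\<Theta> k)"

lemma symX: "k < K \<Longrightarrow> \<forall>a<n k. \<forall>b<n k. XX k a b = XX k b a"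
  using pinvB(3)[of "n k" "\<Theta> k"] sp by auto

lemma symT: "k < K \<Longrightarrow> \<forall>a<n k. \<forall>b<n k. \<Theta> k a b = \<Theta> k b a"
  using sp by (auto simp: spectraplex_def)

lemma expand:
  fixes W D :: "nat \<Rightarrow> (nat \<Rightarrow> nat) \<Rightarrow> real" and t :: real
  defines "r \<equiv> (\<lambda>i. restr \<Omega> (\<lambda>i. \<Sum>k<K. W k i) i - restr \<Omega> Y i)"
  defines "G \<equiv> (\<lambda>k i. 2 * C * r i + 1 / lam k * Tm n k (XX k) (W k) i)"
  shows "F (\<lambda>k i. W k i + t * D k i) = F W + t * (\<Sum>k<K. tinner K n (D k) (G k))
     + t\<^sup>2 * (C * tnorm2 K n (restr \<Omega> (\<lambda>i. \<Sum>k<K. D k i))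
        + (\<Sum>k<K. 1 / (2 * lam k) * tinner K n (D k) (Tm n k (XX k) (D k))))"
proof -
  define d where "d = restr \<Omega> (\<lambda>i. \<Sum>k<K. D k i)"
  have a: "(\<lambda>i. restr \<Omega> (\<lambda>i. \<Sum>k<K. W k i + t * D k i) i - restr \<Omega> Y i) = (\<lambda>i. r i + t * d i)"
    by (auto simp: r_def d_def restr_def sum.distrib sum_distrib_left)
  have rd: "tinner K n r d = (\<Sum>k<K. tinner K n (D k) r)"
  proof -
    have "tinner K n r d = tinner K n r (\<lambda>i. \<Sum>k<K. D k i)"
      unfolding tinner_def d_def by (intro sum.cong refl) (auto simp: r_def restr_def)
    thus ?thesis by (simp add: tinner_sum_right tinner_comm)
  qed
  have c: "tinner K n (\<lambda>i. W k i + t * D k i) (Tm n k (XX k) (\<lambda>i. W k i + t * D k i))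
     = tinner K n (W k) (Tm n k (XX k) (W k)) + 2 * t * tinner K n (D k) (Tm n k (XX k) (W k))
       + t\<^sup>2 * tinner K n (D k) (Tm n k (XX k) (D k))" if k: "k < K" for k
  proof -
    have l: "(\<lambda>i. W k i + t * D k i) = (\<lambda>i. 1 * W k i + t * D k i)" by simp
    have s: "tinner K n (W k) (Tm n k (XX k) (D k)) = tinner K n (D k) (Tm n k (XX k) (W k))"
      by (rule tinner_Tm_sym[where n=n, OF k symX[OF k]])
    show ?thesis unfolding l Tm_lin tinner_lin_left tinner_lin_right s
      by (simp add: algebra_simps power2_eq_square)
  qed
  have G: "tinner K n (D k) (G k) = 2 * C * tinner K n (D k) r + 1 / lam k * tinner K n (D k) (Tm n k (XX k) (W k))" for k
    unfolding G_def by (rule tinner_lin_right)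
  show ?thesis
    unfolding Fobj_def a tnorm2_lin d_def[symmetric] r_def[symmetric]
    using c G rd
    by (simp add: sum.distrib sum_distrib_left sum_distrib_right algebra_simps)
qed


lemma dir:
  fixes x :: "nat \<Rightarrow> (nat \<Rightarrow> nat) \<Rightarrow> real" and W :: "nat \<Rightarrow> (nat \<Rightarrow> nat) \<Rightarrow> real"
  defines "r \<equiv> (\<lambda>i. restr \<Omega> (\<lambda>i. \<Sum>k<K. W k i) i - restr \<Omega> Y i)"
  defines "G \<equiv> (\<lambda>k i. 2 * C * r i + 1 / lam k * Tm n k (XX k) (W k) i)"
  assumes WF: "W \<in> Feas K n \<Theta>" and min: "\<forall>V\<in>Feas K n \<Theta>. F W \<le> F V"
    and act: "\<forall>i\<in>idx K n. (\<Sum>k<K. W k i) = 0 \<longrightarrow> 0 \<le> (\<Sum>k<K. Tm n k (\<Theta> k) (x k) i)"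
  shows "0 \<le> (\<Sum>k<K. tinner K n (Tm n k (\<Theta> k) (x k)) (G k))"
proof -
  define D where "D = (\<lambda>k. Tm n k (\<Theta> k) (x k))"
  define L where "L = (\<Sum>k<K. tinner K n (D k) (G k))"
  define Q where "Q = C * tnorm2 K n (restr \<Omega> (\<lambda>i. \<Sum>k<K. D k i))
        + (\<Sum>k<K. 1 / (2 * lam k) * tinner K n (D k) (Tm n k (XX k) (D k)))"
  have E: "F (\<lambda>k i. W k i + t * D k i) = F W + t * L + t\<^sup>2 * Q" for t
    unfolding L_def Q_def G_def r_def by (rule expand)
  have R: "inR K n k (\<Theta> k) (\<lambda>i. W k i + t * D k i)" if k: "k < K" for k t
  proof -
    have Wk: "\<forall>i\<in>idx K n. W k i = Tm n k (\<Theta> k) (Tm n k (XX k) (W k)) i"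
      using WF k by (auto simp: Feas_def inR_def)
    have "\<forall>i\<in>idx K n. W k i + t * D k i = Tm n k (\<Theta> k) (\<lambda>i. 1 * Tm n k (XX k) (W k) i + t * x k i) i"
      unfolding Tm_lin D_def using Wk by simp
    moreover have "spectraplex (n k) (\<Theta> k)" using sp k by simp
    ultimately show ?thesis using inR_iff[where n=n, OF k]
      by (intro iffD2[OF inR_iff[where n=n, OF k]] exI[of _ "\<lambda>i. 1 * Tm n k (XX k) (W k) i + t * x k i"])
  qed
  have ev1: "\<forall>\<^sub>F t in at_right 0. \<forall>i\<in>idx K n. 0 \<le> (\<Sum>k<K. W k i + t * D k i)"
  proof (rule eventually_ball_finite[OF finite_idx], rule ballI)
    fix i assume i: "i \<in> idx K n"
    have sw: "(\<Sum>k<K. W k i + t * D k i) = (\<Sum>k<K. W k i) + t * (\<Sum>k<K. D k i)" for t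
      by (simp add: sum.distrib sum_distrib_left)
    have W0: "0 \<le> (\<Sum>k<K. W k i)" using WF i by (auto simp: Feas_def)
    show "\<forall>\<^sub>F t in at_right 0. 0 \<le> (\<Sum>k<K. W k i + t * D k i)"
    proof (cases "(\<Sum>k<K. W k i) = 0")
      case True
      hence "0 \<le> (\<Sum>k<K. D k i)" using act i by (simp add: D_def)
      thus ?thesis unfolding sw using True eventually_at_right_less[of "0::real"]
        by (auto elim!: eventually_mono)
    next
      case False
      hence pos: "0 < (\<Sum>k<K. W k i)" using W0 by simp
      have "((\<lambda>t. (\<Sum>k<K. W k i) + t * (\<Sum>k<K. D k i)) \<longlongrightarrow> (\<Sum>k<K. W k i) + 0 * (\<Sum>k<K. D k i)) (at_right 0)"
        by (intro tendsto_intros)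
      hence "\<forall>\<^sub>F t in at_right 0. 0 < (\<Sum>k<K. W k i) + t * (\<Sum>k<K. D k i)"
        using pos by (intro order_tendstoD(1)) auto
      thus ?thesis unfolding sw by (auto elim!: eventually_mono)
    qed
  qed
  have ev2: "\<forall>\<^sub>F t in at_right 0. 0 \<le> L + t * Q"
    using ev1 eventually_at_right_less[of "0::real"]
  proof eventually_elim
    case (elim t)
    have "(\<lambda>k i. W k i + t * D k i) \<in> Feas K n \<Theta>" using elim(1) R by (simp add: Feas_def)
    hence "F W \<le> F (\<lambda>k i. W k i + t * D k i)" using min by blast
    hence "F W \<le> F W + t * L + t\<^sup>2 * Q" unfolding E .
    hence "0 \<le> t * (L + t * Q)" by (simp add: algebra_simps power2_eq_square)
    thus ?case using elim(2) by (simp add: zero_le_mult_iff)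
  qed
  have "((\<lambda>t. L + t * Q) \<longlongrightarrow> L + 0 * Q) (at_right 0)" by (intro tendsto_intros)
  hence "0 \<le> L + 0 * Q" by (rule tendsto_lowerbound[OF _ ev2]) simp
  thus ?thesis by (simp add: L_def D_def)
qed


lemma tinner_delta: "g \<in> idx K n \<Longrightarrow> tinner K n (\<lambda>i. if i = g then 1 else 0) V = V g"
  unfolding tinner_def by (simp add: dl, subst sum.delta) (auto simp: finite_idx)

lemma dotp_split:
  "dotp ({..<K} \<times> idx K n) y v = (\<Sum>k<K. tinner K n (\<lambda>j. y (k, j)) (\<lambda>j. v (k, j)))"
  unfolding dotp_def tinner_def by (simp add: sum.cartesian_product)

lemma kkt_mult:
  fixes W :: "nat \<Rightarrow> (nat \<Rightarrow> nat) \<Rightarrow> real"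
  defines "r \<equiv> (\<lambda>i. restr \<Omega> (\<lambda>i. \<Sum>k<K. W k i) i - restr \<Omega> Y i)"
  defines "G \<equiv> (\<lambda>k i. 2 * C * r i + 1 / lam k * Tm n k (XX k) (W k) i)"
  assumes WF: "W \<in> Feas K n \<Theta>" and min: "\<forall>V\<in>Feas K n \<Theta>. F W \<le> F V"
  shows "\<exists>S. (\<forall>i\<in>idx K n. 0 \<le> S i) \<and> (\<forall>i\<in>idx K n. S i \<noteq> 0 \<longrightarrow> (\<Sum>k<K. W k i) = 0)
      \<and> (\<forall>k<K. \<forall>j\<in>idx K n. Tm n k (\<Theta> k) (G k) j = Tm n k (\<Theta> k) S j)"
proof -
  define A where "A = {i \<in> idx K n. (\<Sum>k<K. W k i) = 0}"
  define I where "I = {..<K} \<times> idx K n"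
  define \<delta> where "\<delta> = (\<lambda>(g::nat \<Rightarrow> nat) (i::nat \<Rightarrow> nat). if i = g then 1 else (0::real))"
  define a where "a = (\<lambda>g (p :: nat \<times> (nat \<Rightarrow> nat)). Tm n (fst p) (\<Theta> (fst p)) (\<delta> g) (snd p))"
  define c where "c = (\<lambda>p :: nat \<times> (nat \<Rightarrow> nat). Tm n (fst p) (\<Theta> (fst p)) (G (fst p)) (snd p))"
  have da: "dotp I y (a g) = (\<Sum>k<K. Tm n k (\<Theta> k) (\<lambda>j. y (k, j)) g)" if g: "g \<in> idx K n" for y g
  proof -
    have "dotp I y (a g) = (\<Sum>k<K. tinner K n (\<lambda>j. y (k, j)) (Tm n k (\<Theta> k) (\<delta> g)))"
      unfolding I_def dotp_split by (simp add: a_def)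
    also have "\<dots> = (\<Sum>k<K. tinner K n (\<delta> g) (Tm n k (\<Theta> k) (\<lambda>j. y (k, j))))"
      by (intro sum.cong refl tinner_Tm_sym[where n=n] symT) auto
    also have "\<dots> = (\<Sum>k<K. Tm n k (\<Theta> k) (\<lambda>j. y (k, j)) g)"
      unfolding \<delta>_def using tinner_delta[OF g] by simp
    finally show ?thesis .
  qed
  have dc: "dotp I y c = (\<Sum>k<K. tinner K n (Tm n k (\<Theta> k) (\<lambda>j. y (k, j))) (G k))" for y
  proof -
    have "dotp I y c = (\<Sum>k<K. tinner K n (\<lambda>j. y (k, j)) (Tm n k (\<Theta> k) (G k)))"
      unfolding I_def dotp_split by (simp add: c_def)
    also have "\<dots> = (\<Sum>k<K. tinner K n (G k) (Tm n k (\<Theta> k) (\<lambda>j. y (k, j))))"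
      by (intro sum.cong refl tinner_Tm_sym[where n=n] symT) auto
    finally show ?thesis by (simp add: tinner_comm)
  qed
  have hyp: "\<forall>y. (\<forall>g\<in>A. 0 \<le> dotp I y (a g)) \<longrightarrow> 0 \<le> dotp I y c"
  proof (intro allI impI)
    fix y assume h: "\<forall>g\<in>A. 0 \<le> dotp I y (a g)"
    have "\<forall>i\<in>idx K n. (\<Sum>k<K. W k i) = 0 \<longrightarrow> 0 \<le> (\<Sum>k<K. Tm n k (\<Theta> k) (\<lambda>j. y (k, j)) i)"
      using h da by (auto simp: A_def)
    from dir[OF WF min this] show "0 \<le> dotp I y c" unfolding dc G_def r_def .
  qed
  have finA: "finite A" using finite_idx by (simp add: A_def)
  have finI: "finite I" using finite_idx by (simp add: I_def)
  obtain \<mu> where \<mu>: "\<forall>g\<in>A. 0 \<le> \<mu> g" "\<forall>p\<in>I. c p = (\<Sum>g\<in>A. \<mu> g * a g p)"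
    using farkas[OF finI finA hyp] by blast
  define S where "S = (\<lambda>i. if i \<in> A then \<mu> i else 0)"
  have "Tm n k (\<Theta> k) (G k) j = Tm n k (\<Theta> k) S j" if k: "k < K" and j: "j \<in> idx K n" for k j
  proof -
    have "Tm n k (\<Theta> k) (G k) j = c (k, j)" by (simp add: c_def)
    also have "\<dots> = (\<Sum>g\<in>A. \<mu> g * a g (k, j))" using \<mu>(2) k j by (simp add: I_def)
    also have "\<dots> = (\<Sum>g\<in>A. \<Sum>b<n k. \<mu> g * (\<Theta> k (j k) b * \<delta> g (j(k := b))))"
      by (simp add: a_def Tm_def sum_distrib_left)
    also have "\<dots> = (\<Sum>b<n k. \<Sum>g\<in>A. \<mu> g * (\<Theta> k (j k) b * \<delta> g (j(k := b))))" by (rule sum.swap)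
    also have "\<dots> = (\<Sum>b<n k. \<Theta> k (j k) b * S (j(k := b)))"
    proof (rule sum.cong[OF refl])
      fix b
      have "(\<Sum>g\<in>A. \<mu> g * (\<Theta> k (j k) b * \<delta> g (j(k := b)))) = (\<Sum>g\<in>A. if j(k := b) = g then \<Theta> k (j k) b * \<mu> g else 0)"
        by (intro sum.cong refl) (auto simp: \<delta>_def)
      also have "\<dots> = \<Theta> k (j k) b * S (j(k := b))" by (subst sum.delta'[OF finA]) (auto simp: S_def)
      finally show "(\<Sum>g\<in>A. \<mu> g * (\<Theta> k (j k) b * \<delta> g (j(k := b)))) = \<Theta> k (j k) b * S (j(k := b))" .
    qed
    also have "\<dots> = Tm n k (\<Theta> k) S j" by (simp add: Tm_def)
    finally show ?thesis .
  qed
  moreover have "\<forall>i\<in>idx K n. 0 \<le> S i" using \<mu>(1) by (simp add: S_def)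
  moreover have "\<forall>i\<in>idx K n. S i \<noteq> 0 \<longrightarrow> (\<Sum>k<K. W k i) = 0" by (auto simp: S_def A_def)
  ultimately show ?thesis by (intro exI[of _ S]) auto
qed


lemma Tm_scale: "Tm n k M (\<lambda>i. p * U i) = (\<lambda>i. p * Tm n k M U i)"
  by (simp add: Tm_def fun_eq_iff sum_distrib_left mult.left_commute)

lemma kkt_value:
  fixes W :: "nat \<Rightarrow> (nat \<Rightarrow> nat) \<Rightarrow> real"
  assumes WF: "W \<in> Feas K n \<Theta>" and min: "\<forall>V\<in>Feas K n \<Theta>. F W \<le> F V"
  shows "\<exists>Z S. (\<forall>i\<in>idx K n. Z i = restr \<Omega> Z i) \<and> (\<forall>i\<in>idx K n. 0 \<le> S i)
            \<and> dual_obj K n \<Omega> Y C lam \<Theta> Z S = F W"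
proof -
  define SW where "SW = (\<lambda>i. \<Sum>k<K. W k i)"
  define r where "r = (\<lambda>i. restr \<Omega> SW i - restr \<Omega> Y i)"
  define G where "G = (\<lambda>k i. 2 * C * r i + 1 / lam k * Tm n k (XX k) (W k) i)"
  from kkt_mult[OF WF min] obtain S where S0: "\<forall>i\<in>idx K n. 0 \<le> S i"
    and Sc0: "\<forall>i\<in>idx K n. S i \<noteq> 0 \<longrightarrow> (\<Sum>k<K. W k i) = 0"
    and SG0: "\<forall>k<K. \<forall>j\<in>idx K n. Tm n k (\<Theta> k) (\<lambda>i. 2 * C * (restr \<Omega> (\<lambda>i. \<Sum>k<K. W k i) i - restr \<Omega> Y i) + 1 / lam k * Tm n k (XX k) (W k) i) j = Tm n k (\<Theta> k) S j"
    by blast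
  have Sc: "\<forall>i\<in>idx K n. S i \<noteq> 0 \<longrightarrow> SW i = 0" using Sc0 by (simp add: SW_def)
  have SG: "\<forall>k<K. \<forall>j\<in>idx K n. Tm n k (\<Theta> k) (G k) j = Tm n k (\<Theta> k) S j"
    using SG0 by (simp add: G_def r_def SW_def)
  define Z where "Z = (\<lambda>i. (- 2 * C) * r i)"
  define v where "v = (\<lambda>i. Z i + S i)"
  have Zf: "\<forall>i\<in>idx K n. Z i = restr \<Omega> Z i" by (simp add: Z_def r_def restr_def)
  have Wv: "W k j = lam k * Tm n k (\<Theta> k) v j" if k: "k < K" and j: "j \<in> idx K n" for k j
  proof -
    have lk: "lam k > 0" using lam k by simp
    have "inR K n k (\<Theta> k) (W k)" using WF k by (simp add: Feas_def)
    hence inr: "Tm n k (\<Theta> k) (Tm n k (XX k) (W k)) j = W k j"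
      using j unfolding inR_def by blast
    have g: "G k = (\<lambda>i. (2 * C) * r i + (1 / lam k) * Tm n k (XX k) (W k) i)" by (simp add: G_def)
    have "Tm n k (\<Theta> k) (G k) j = (2 * C) * Tm n k (\<Theta> k) r j + (1 / lam k) * Tm n k (\<Theta> k) (Tm n k (XX k) (W k)) j"
      unfolding g Tm_lin by (rule refl)
    hence "Tm n k (\<Theta> k) (G k) j = 2 * C * Tm n k (\<Theta> k) r j + 1 / lam k * W k j"
      unfolding inr .
    moreover have "Tm n k (\<Theta> k) v j = - 2 * C * Tm n k (\<Theta> k) r j + 1 * Tm n k (\<Theta> k) S j"
    proof -
      have "v = (\<lambda>i. (- 2 * C) * r i + 1 * S i)" by (simp add: v_def Z_def)
      thus ?thesis by (simp only: Tm_lin)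
    qed
    ultimately have "Tm n k (\<Theta> k) v j = 1 / lam k * W k j" using SG k j by simp
    thus ?thesis using lk by simp
  qed
  have Wv': "\<forall>i\<in>idx K n. W k i = (\<lambda>i. lam k * Tm n k (\<Theta> k) v i) i" if "k < K" for k
    using Wv[OF that] by simp
  have q: "tinner K n (W k) (Tm n k (XX k) (W k)) = (lam k)\<^sup>2 * tinner K n v (Tm n k (\<Theta> k) v)"
    if k: "k < K" for k
  proof -
    have spk: "spectraplex (n k) (\<Theta> k)" using sp k by simp
    have c1: "\<forall>i\<in>idx K n. Tm n k (XX k) (W k) i = lam k * Tm n k (XX k) (Tm n k (\<Theta> k) v) i"
      using Tm_cong[OF _ k Wv'[OF k]] by (simp add: Tm_scale)
    have "tinner K n (W k) (Tm n k (XX k) (W k)) =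
        tinner K n (\<lambda>i. lam k * Tm n k (\<Theta> k) v i) (\<lambda>i. lam k * Tm n k (XX k) (Tm n k (\<Theta> k) v) i)"
      by (rule tinner_cong) (use Wv'[OF k] c1 in auto)
    also have "\<dots> = (lam k)\<^sup>2 * tinner K n (Tm n k (\<Theta> k) v) (Tm n k (XX k) (Tm n k (\<Theta> k) v))"
      by (simp add: tinner_def sum_distrib_left power2_eq_square algebra_simps)
    also have "tinner K n (Tm n k (\<Theta> k) v) (Tm n k (XX k) (Tm n k (\<Theta> k) v))
        = tinner K n v (Tm n k (\<Theta> k) (Tm n k (XX k) (Tm n k (\<Theta> k) v)))"
      by (subst tinner_comm) (rule tinner_Tm_sym[where n=n, OF k symT[OF k]])
    also have "\<dots> = tinner K n v (Tm n k (\<Theta> k) v)"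
      by (rule tinner_cong) (use TXT[where n=n, OF k spk] in auto)
    finally show ?thesis .
  qed
  have lv: "tinner K n v (W k) = lam k * tinner K n v (Tm n k (\<Theta> k) v)" if k: "k < K" for k
  proof -
    have "tinner K n v (W k) = tinner K n v (\<lambda>i. lam k * Tm n k (\<Theta> k) v i)"
      by (rule tinner_cong) (use Wv'[OF k] in auto)
    thus ?thesis by (simp add: tinner_def sum_distrib_left algebra_simps)
  qed
  have FW: "F W = C * tnorm2 K n r + (\<Sum>k<K. lam k / 2 * tinner K n v (Tm n k (\<Theta> k) v))"
  proof -
    have "1 / (2 * lam k) * tinner K n (W k) (Tm n k (XX k) (W k)) = lam k / 2 * tinner K n v (Tm n k (\<Theta> k) v)"
      if k: "k < K" for k
    proof -
      have "lam k > 0" using lam k by simp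
      thus ?thesis unfolding q[OF k] by (simp add: power2_eq_square)
    qed
    hence "(\<Sum>k<K. 1 / (2 * lam k) * tinner K n (W k) (Tm n k (XX k) (W k)))
        = (\<Sum>k<K. lam k / 2 * tinner K n v (Tm n k (\<Theta> k) v))" by (intro sum.cong) auto
    thus ?thesis unfolding Fobj_def SW_def[symmetric] r_def[symmetric] by simp
  qed
  have sumv: "(\<Sum>k<K. lam k * tinner K n v (Tm n k (\<Theta> k) v)) = tinner K n Z (restr \<Omega> SW)"
  proof -
    have "(\<Sum>k<K. lam k * tinner K n v (Tm n k (\<Theta> k) v)) = (\<Sum>k<K. tinner K n v (W k))"
      using lv by simp
    also have "\<dots> = tinner K n v SW" unfolding SW_def tinner_sum_right ..
    also have "\<dots> = tinner K n Z (restr \<Omega> SW)"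
      unfolding tinner_def v_def using Sc
      by (intro sum.cong refl) (auto simp: Z_def r_def restr_def algebra_simps)
    finally show ?thesis .
  qed
  have dual: "dual_obj K n \<Omega> Y C lam \<Theta> Z S = tinner K n Z (restr \<Omega> Y) - 1 / (4 * C) * tnorm2 K n Z
        - (\<Sum>k<K. lam k / 2 * tinner K n v (Tm n k (\<Theta> k) v))"
    unfolding dual_obj_def v_def[symmetric] using unfold_qf_eq by simp
  have gap: "C * tnorm2 K n r + 1 / (4 * C) * tnorm2 K n Z - tinner K n Z (restr \<Omega> Y)
              + tinner K n Z (restr \<Omega> SW) = 0"
    unfolding r_def gap_identity[OF C] by (simp add: Z_def r_def)
  have "(\<Sum>k<K. lam k / 2 * tinner K n v (Tm n k (\<Theta> k) v)) = (\<Sum>k<K. lam k * tinner K n v (Tm n k (\<Theta> k) v)) / 2"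
    by (simp add: sum_divide_distrib)
  hence "dual_obj K n \<Omega> Y C lam \<Theta> Z S = F W" using FW dual gap sumv by simp
  thus ?thesis using Zf S0 by blast
qed

end

lemma pinv_term_eq:
  assumes k: "k < K" and sp: "spectraplex (n k) \<Theta>"
  shows "pinv_term K n k \<Theta> W = (if inR K n k \<Theta> W then ereal (tinner K n W (Tm n k (pinv (n k) \<Theta>) W)) else \<infinity>)"
  unfolding pinv_term_def inR_range[where n=n, OF k sp] unfold_qf_eq[OF k] ..

lemma primal_eq:
  assumes sp: "\<forall>k<K. spectraplex (n k) (\<Theta> k)" and lam: "\<forall>k<K. lam k > 0"
  shows "primal_obj K n \<Omega> Y C lam \<Theta> Wf =
    (if \<forall>k<K. inR K n k (\<Theta> k) (Wf k) then ereal (Fobj K n \<Omega> Y C lam \<Theta> Wf) else \<infinity>)"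
proof (cases "\<forall>k<K. inR K n k (\<Theta> k) (Wf k)")
  case True
  have "(\<Sum>k<K. ereal (1 / (2 * lam k)) * pinv_term K n k (\<Theta> k) (Wf k))
      = (\<Sum>k<K. ereal (1 / (2 * lam k) * tinner K n (Wf k) (Tm n k (pinv (n k) (\<Theta> k)) (Wf k))))"
    using True sp by (intro sum.cong refl) (simp add: pinv_term_eq)
  thus ?thesis using True by (simp add: primal_obj_def Fobj_def Let_def)
next
  case False
  then obtain k0 where k0: "k0 < K" "\<not> inR K n k0 (\<Theta> k0) (Wf k0)" by blast
  have "ereal (1 / (2 * lam k0)) * pinv_term K n k0 (\<Theta> k0) (Wf k0) = \<infinity>"
  proof -
    have "lam k0 > 0" using lam k0 by simp
    thus ?thesis using k0 sp by (simp add: pinv_term_eq)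
  qed
  hence "(\<Sum>k<K. ereal (1 / (2 * lam k)) * pinv_term K n k (\<Theta> k) (Wf k)) = \<infinity>"
    using k0 by (subst sum_Pinfty) auto
  thus ?thesis using False by (simp add: primal_obj_def Let_def)
qed

theorem theorem2:
  fixes K :: nat and n :: "nat \<Rightarrow> nat" and \<Omega> :: "(nat \<Rightarrow> nat) set"
    and Y :: "(nat \<Rightarrow> nat) \<Rightarrow> real" and C :: real and lam :: "nat \<Rightarrow> real"
  assumes "K \<ge> 1"
    and "\<forall>k<K. n k > 0"
    and "\<Omega> \<subseteq> idx K n"
    and "\<forall>i. i \<notin> \<Omega> \<longrightarrow> Y i = 0"
    and "C > 0"
    and "\<forall>k<K. lam k > 0"
  shows "(INF p \<in> {(\<Theta>, Wf). (\<forall>k<K. spectraplex (n k) (\<Theta> k)) \<and>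
                              (\<forall>i\<in>idx K n. 0 \<le> (\<Sum>k<K. Wf k i))}.
            primal_obj K n \<Omega> Y C lam (fst p) (snd p))
       = (INF \<Theta> \<in> {\<Theta>. \<forall>k<K. spectraplex (n k) (\<Theta> k)}.
            SUP q \<in> {(Z, S). (\<forall>i\<in>idx K n. Z i = restr \<Omega> Z i) \<and> (\<forall>i\<in>idx K n. 0 \<le> S i)}.
              ereal (dual_obj K n \<Omega> Y C lam \<Theta> (fst q) (snd q)))"
  (is "?L = ?R")
proof (rule antisym)
  have C: "C > 0" and lam: "\<forall>k<K. lam k > 0" using assms by auto
  show "?L \<le> ?R"
  proof (rule INF_greatest)
    fix \<Theta> assume "\<Theta> \<in> {\<Theta>. \<forall>k<K. spectraplex (n k) (\<Theta> k)}"
    hence sp: "\<forall>k<K. spectraplex (n k) (\<Theta> k)" by simp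
    obtain W where WF: "W \<in> Feas K n \<Theta>" and min: "\<forall>V\<in>Feas K n \<Theta>. Fobj K n \<Omega> Y C lam \<Theta> W \<le> Fobj K n \<Omega> Y C lam \<Theta> V"
      using exists_min[OF sp lam C] by blast
    obtain Z S where Z: "\<forall>i\<in>idx K n. Z i = restr \<Omega> Z i" and S: "\<forall>i\<in>idx K n. 0 \<le> S i"
      and eq: "dual_obj K n \<Omega> Y C lam \<Theta> Z S = Fobj K n \<Omega> Y C lam \<Theta> W"
      using kkt_value[OF sp lam C WF min] by blast
    have "?L \<le> primal_obj K n \<Omega> Y C lam (fst (\<Theta>, W)) (snd (\<Theta>, W))"
      by (rule INF_lower) (use sp WF in \<open>auto simp: Feas_def\<close>)
    also have "\<dots> = ereal (Fobj K n \<Omega> Y C lam \<Theta> W)"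
      using primal_eq[OF sp lam] WF by (simp add: Feas_def)
    also have "\<dots> = ereal (dual_obj K n \<Omega> Y C lam \<Theta> (fst (Z, S)) (snd (Z, S)))" using eq by simp
    also have "\<dots> \<le> (SUP q \<in> {(Z, S). (\<forall>i\<in>idx K n. Z i = restr \<Omega> Z i) \<and> (\<forall>i\<in>idx K n. 0 \<le> S i)}.
              ereal (dual_obj K n \<Omega> Y C lam \<Theta> (fst q) (snd q)))"
      by (rule SUP_upper) (use Z S in auto)
    finally show "?L \<le> (SUP q \<in> {(Z, S). (\<forall>i\<in>idx K n. Z i = restr \<Omega> Z i) \<and> (\<forall>i\<in>idx K n. 0 \<le> S i)}.
              ereal (dual_obj K n \<Omega> Y C lam \<Theta> (fst q) (snd q)))" .
  qed
  show "?R \<le> ?L"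
  proof (rule INF_greatest)
    fix p :: "(nat \<Rightarrow> nat \<Rightarrow> nat \<Rightarrow> real) \<times> (nat \<Rightarrow> (nat \<Rightarrow> nat) \<Rightarrow> real)"
    assume p: "p \<in> {(\<Theta>, Wf). (\<forall>k<K. spectraplex (n k) (\<Theta> k)) \<and> (\<forall>i\<in>idx K n. 0 \<le> (\<Sum>k<K. Wf k i))}"
    obtain \<Theta> Wf where pe: "p = (\<Theta>, Wf)" by (cases p)
    have sp: "\<forall>k<K. spectraplex (n k) (\<Theta> k)" and W0: "\<forall>i\<in>idx K n. 0 \<le> (\<Sum>k<K. Wf k i)"
      using p pe by auto
    have "?R \<le> (SUP q \<in> {(Z, S). (\<forall>i\<in>idx K n. Z i = restr \<Omega> Z i) \<and> (\<forall>i\<in>idx K n. 0 \<le> S i)}.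
              ereal (dual_obj K n \<Omega> Y C lam \<Theta> (fst q) (snd q)))"
      by (rule INF_lower) (use sp in simp)
    also have "\<dots> \<le> primal_obj K n \<Omega> Y C lam \<Theta> Wf"
    proof (rule SUP_least)
      fix q :: "((nat \<Rightarrow> nat) \<Rightarrow> real) \<times> ((nat \<Rightarrow> nat) \<Rightarrow> real)"
      assume q: "q \<in> {(Z, S). (\<forall>i\<in>idx K n. Z i = restr \<Omega> Z i) \<and> (\<forall>i\<in>idx K n. 0 \<le> S i)}"
      obtain Z S where qe: "q = (Z, S)" by (cases q)
      have Z: "\<forall>i\<in>idx K n. Z i = restr \<Omega> Z i" and S: "\<forall>i\<in>idx K n. 0 \<le> S i" using q qe by auto
      show "ereal (dual_obj K n \<Omega> Y C lam \<Theta> (fst q) (snd q)) \<le> primal_obj K n \<Omega> Y C lam \<Theta> Wf"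
      proof (cases "\<forall>k<K. inR K n k (\<Theta> k) (Wf k)")
        case True
        thus ?thesis using weak_real[OF sp True lam C W0 Z S] primal_eq[OF sp lam] qe by simp
      next
        case False
        have "primal_obj K n \<Omega> Y C lam \<Theta> Wf = \<infinity>"
          using False by (simp only: primal_eq[OF sp lam] if_False)
        thus ?thesis by simp
      qed
    qed
    finally show "?R \<le> primal_obj K n \<Omega> Y C lam (fst p) (snd p)" using pe by simp
  qed
qed


end
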